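(* Let $A,B\in\mathbb{B}(\mathscr{H})$, let $x\in\mathscr{H}$ be a unit vector, and let $f:[0,\infty)\to\mathbb{R}$ be an increasing convex function. Then for every $0<\alpha<1$, \[ f\left(|\langle Ax,x\rangle\langle Bx,x\rangle|^2\right)\le \frac{f\left(|\langle BAx,x\rangle|^2\right)+\left\langle\left(\alpha f\left(|A|^{2/\alpha}\right)+(1-\alpha)f\left(|B^*|^{2/(1-\alpha)}\right)\right)x,x\right\rangle}{2}. \] Further, \[ f\left(|\langle Ax,x\rangle\langle Bx,x\rangle|\right)\le \frac12 f\left(|\langle BAx,x\rangle|\right)+\frac14\left\langle\left(f(|A|^2)+f(|B^*|^2)\right)x,x\right\rangle. \]
   Context: $\mathscr{H}$ is a complex Hilbert space with inner product $\langle\cdot,\cdot\rangle$, $\mathbb{B}(\mathscr{H})$ is the algebra of bounded linear operators on it, $T^*$ denotes the adjoint, and $|T|=(T^*T)^{1/2}$. For a positive operator $P$ and a function $f$ on $[0,\infty)$, $f(P)$ is defined by continuous functional calculus. *)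

theory Defs
  imports "HOL-Analysis.Analysis" "HOL-Computational_Algebra.Polynomial"
begin

text \<open>The distribution has no complex vector spaces,
so we introduce them as a type class: a (real) Banach space carrying a complex
scalar multiplication compatible with the real one, and a complex inner product
(linear in the first argument, conjugate-symmetric, positive) inducing the norm.\<close>

class chilbert = banach +
  fixes scaleC :: "complex \<Rightarrow> 'a \<Rightarrow> 'a"
    and cinner :: "'a \<Rightarrow> 'a \<Rightarrow> complex"
  assumes scaleC_add_right: "scaleC a (x + y) = scaleC a x + scaleC a y"
    and scaleC_add_left: "scaleC (a + b) x = scaleC a x + scaleC b x"
    and scaleC_scaleC: "scaleC a (scaleC b x) = scaleC (a * b) x"
    and scaleC_one: "scaleC 1 x = x"
    and scaleR_scaleC: "scaleR r x = scaleC (complex_of_real r) x"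
    and cinner_add_left: "cinner (x + y) z = cinner x z + cinner y z"
    and cinner_scaleC_left: "cinner (scaleC a x) y = a * cinner x y"
    and cinner_commute: "cinner x y = cnj (cinner y x)"
    and cinner_self_real: "Im (cinner x x) = 0"
    and cinner_self_nonneg: "0 \<le> Re (cinner x x)"
    and norm_cinner: "norm x = sqrt (Re (cinner x x))"

definition bounded_op :: "('a::chilbert \<Rightarrow> 'a) \<Rightarrow> bool" where
  "bounded_op A \<longleftrightarrow> bounded_linear A \<and> (\<forall>c x. A (scaleC c x) = scaleC c (A x))"

definition adj :: "('a::chilbert \<Rightarrow> 'a) \<Rightarrow> ('a \<Rightarrow> 'a)" where
  "adj A = (THE B. \<forall>x y. cinner (A x) y = cinner x (B y))"

definition poly_op :: "real poly \<Rightarrow> ('a::real_normed_vector \<Rightarrow> 'a) \<Rightarrow> ('a \<Rightarrow> 'a)" where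
  "poly_op p P = (\<lambda>x. \<Sum>k\<le>degree p. coeff p k *\<^sub>R (P ^^ k) x)"

text \<open>Continuous functional calculus f(P) for a positive operator P (spectrum in
[0, norm P]): the operator-norm limit of p_n(P) for any sequence of polynomials
p_n converging uniformly to f on [0, norm P].\<close>
definition fcalc :: "(real \<Rightarrow> real) \<Rightarrow> ('a::real_normed_vector \<Rightarrow> 'a) \<Rightarrow> ('a \<Rightarrow> 'a)" where
  "fcalc f P = (THE T. bounded_linear T \<and>
     (\<forall>p :: nat \<Rightarrow> real poly.
        uniform_limit {0..onorm P} (\<lambda>n t. poly (p n) t) f sequentially \<longrightarrow>
        (\<lambda>n. onorm (\<lambda>x. poly_op (p n) P x - T x)) \<longlonglongrightarrow> 0))"

definition abs_op :: "('a::chilbert \<Rightarrow> 'a) \<Rightarrow> ('a \<Rightarrow> 'a)" where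
  "abs_op T = fcalc sqrt (adj T \<circ> T)"

end

theory Submission
  imports Defs "HOL-Computational_Algebra.Fundamental_Theorem_Algebra"
begin

section \<open>Basic facts on the complex inner product\<close>

lemma cinner_zero_left[simp]: "cinner 0 y = 0"
proof -
  have "cinner (0+0) y = cinner 0 y + cinner 0 y" by (rule cinner_add_left)
  then show ?thesis by simp
qed

lemma cinner_minus_left[simp]: "cinner (- x) y = - cinner x y"
proof -
  have "cinner (x + - x) y = cinner x y + cinner (-x) y" by (rule cinner_add_left)
  then show ?thesis by (simp add: add_eq_0_iff)
qed

lemma cinner_diff_left: "cinner (x - y) z = cinner x z - cinner y z"
  using cinner_add_left[of x "-y" z] by simp

lemma cinner_add_right: "cinner x (y + z) = cinner x y + cinner x z"
  by (metis cinner_add_left cinner_commute complex_cnj_add)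

lemma cinner_zero_right[simp]: "cinner x 0 = 0"
  by (metis cinner_commute cinner_zero_left complex_cnj_zero)

lemma cinner_minus_right[simp]: "cinner x (- y) = - cinner x y"
  by (metis cinner_commute cinner_minus_left complex_cnj_minus)

lemma cinner_diff_right: "cinner x (y - z) = cinner x y - cinner x z"
  using cinner_add_right[of x y "-z"] by simp

lemma cinner_scaleC_right: "cinner x (scaleC a y) = cnj a * cinner x y"
  by (metis cinner_commute cinner_scaleC_left complex_cnj_mult)

lemma cinner_scaleR_left: "cinner (r *\<^sub>R x) y = of_real r * cinner x y"
  by (simp add: scaleR_scaleC cinner_scaleC_left)

lemma cinner_scaleR_right: "cinner x (r *\<^sub>R y) = of_real r * cinner x y"
  by (simp add: scaleR_scaleC cinner_scaleC_right)

lemma cinner_sum_left: "cinner (\<Sum>i\<in>I. f i) y = (\<Sum>i\<in>I. cinner (f i) y)"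
  by (induction I rule: infinite_finite_induct) (simp_all add: cinner_add_left)

lemma norm_sq_cinner: "(norm x)^2 = Re (cinner x x)"
  using norm_cinner[of x] cinner_self_nonneg[of x] by simp

lemma cinner_self: "cinner x x = complex_of_real ((norm x)^2)"
  using norm_sq_cinner[of x] cinner_self_real[of x] by (simp add: complex_eq_iff)

lemma cinner_self_eq_0[simp]: "cinner x x = 0 \<longleftrightarrow> x = 0"
  by (simp add: cinner_self)

lemma cinner_ext: "(\<And>y. cinner x y = cinner z y) \<Longrightarrow> x = z"
proof -
  assume h: "\<And>y. cinner x y = cinner z y"
  have "cinner (x - z) (x - z) = 0" using h[of "x - z"] by (simp add: cinner_diff_left)
  then show "x = z" by simp
qed

lemma cinner_ext_right: "(\<And>y. cinner y x = cinner y z) \<Longrightarrow> x = z"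
  by (rule cinner_ext) (metis cinner_commute)

lemma scaleC_zero_right[simp]: "scaleC a 0 = 0"
  by (rule cinner_ext) (simp add: cinner_scaleC_left)

lemma scaleC_zero_left[simp]: "scaleC 0 x = 0"
  by (rule cinner_ext) (simp add: cinner_scaleC_left)

lemma scaleC_diff_right: "scaleC a (x - y) = scaleC a x - scaleC a y"
  by (rule cinner_ext) (simp add: cinner_scaleC_left cinner_diff_left algebra_simps)

lemma scaleC_diff_left: "scaleC (a - b) x = scaleC a x - scaleC b x"
  by (rule cinner_ext) (simp add: cinner_scaleC_left cinner_diff_left algebra_simps)

lemma cmod_sq_eq: "complex_of_real ((cmod k)^2) = k * cnj k"
  using complex_norm_square[of k] by simp

lemma norm_scaleC: "norm (scaleC c x) = cmod c * norm x"
proof -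
  have "cinner (scaleC c x) (scaleC c x) = (c * cnj c) * cinner x x"
    by (simp add: cinner_scaleC_left cinner_scaleC_right mult.assoc)
  also have "\<dots> = of_real ((cmod c)^2 * (norm x)^2)"
    by (simp only: cinner_self cmod_sq_eq[symmetric] of_real_mult)
  finally have "(norm (scaleC c x))^2 = (cmod c)^2 * (norm x)^2"
    by (simp add: norm_sq_cinner)
  then have "(norm (scaleC c x))^2 = (cmod c * norm x)^2" by (simp add: power_mult_distrib)
  then show ?thesis by (simp add: power2_eq_iff_nonneg)
qed


lemma proj_identity:
  assumes "y \<noteq> 0"
  shows "(norm (x - scaleC (cinner x y / of_real ((norm y)^2)) y))^2
          = (norm x)^2 - (cmod (cinner x y))^2 / (norm y)^2"
proof -
  define k where "k = cinner x y"
  define n where "n = (norm y)^2"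
  have n0: "n > 0" unfolding n_def using assms by simp
  define c where "c = k / of_real n"
  have yy: "cinner y y = of_real n" unfolding n_def by (rule cinner_self)
  have yx: "cinner y x = cnj k" unfolding k_def by (rule cinner_commute)
  have xy: "cinner x y = k" unfolding k_def ..
  have "cinner (x - scaleC c y) (x - scaleC c y)
      = cinner x x - cnj c * k - c * cnj k + c * cnj c * of_real n"
    by (simp add: cinner_diff_left cinner_diff_right cinner_scaleC_left cinner_scaleC_right
        yy yx xy algebra_simps)
  also have "\<dots> = cinner x x - k * cnj k / of_real n"
    using n0 unfolding c_def by (simp add: field_simps)
  also have "\<dots> = cinner x x - of_real ((cmod k)^2 / n)"
    by (simp only: cmod_sq_eq[symmetric] of_real_divide)
  finally have "Re (cinner (x - scaleC c y) (x - scaleC c y)) = (norm x)^2 - (cmod k)^2 / n"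
    by (simp add: norm_sq_cinner)
  then show ?thesis unfolding c_def k_def n_def by (simp add: norm_sq_cinner)
qed

lemma Cauchy_Schwarz: "cmod (cinner x y) \<le> norm x * norm y"
proof (cases "y = 0")
  case True then show ?thesis by simp
next
  case False
  have "0 \<le> (norm x)^2 - (cmod (cinner x y))^2 / (norm y)^2"
    using proj_identity[OF False, of x] by (metis zero_le_power2)
  then have "(cmod (cinner x y))^2 \<le> (norm x)^2 * (norm y)^2"
    using False by (simp add: field_simps)
  then have "(cmod (cinner x y))^2 \<le> (norm x * norm y)^2" by (simp add: power_mult_distrib)
  then show ?thesis by (simp add: power2_le_iff_abs_le)
qed

lemma bounded_bilinear_cinner: "bounded_bilinear (cinner :: 'a::chilbert \<Rightarrow> 'a \<Rightarrow> complex)"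
proof
  fix a a' b b' :: 'a and r :: real
  show "cinner (a + a') b = cinner a b + cinner a' b" by (rule cinner_add_left)
  show "cinner a (b + b') = cinner a b + cinner a b'" by (rule cinner_add_right)
  show "cinner (r *\<^sub>R a) b = r *\<^sub>R cinner a b" by (simp add: cinner_scaleR_left scaleR_conv_of_real)
  show "cinner a (r *\<^sub>R b) = r *\<^sub>R cinner a b" by (simp add: cinner_scaleR_right scaleR_conv_of_real)
next
  show "\<exists>K. \<forall>a b. norm (cinner a b) \<le> norm (a::'a) * norm b * K"
    by (rule exI[of _ 1]) (simp add: Cauchy_Schwarz)
qed

lemma parallelogram: "(norm (a + b :: 'a::chilbert))^2 + (norm (a - b))^2 = 2 * (norm a)^2 + 2 * (norm b)^2"
  unfolding norm_sq_cinner by (simp add: cinner_add_left cinner_add_right cinner_diff_left cinner_diff_right)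

section \<open>Riesz representation and adjoints\<close>

lemma riesz:
  fixes \<phi> :: "'a::chilbert \<Rightarrow> complex"
  assumes bl: "bounded_linear \<phi>" and hom: "\<And>c x. \<phi> (scaleC c x) = c * \<phi> x"
  shows "\<exists>z. \<forall>x. \<phi> x = cinner x z"
proof (cases "\<forall>x. \<phi> x = 0")
  case True then show ?thesis by (intro exI[of _ 0]) simp
next
  case False
  then obtain u where u: "\<phi> u \<noteq> 0" by blast
  interpret \<phi>: bounded_linear \<phi> by (rule bl)
  define N where "N = {n. \<phi> n = 0}"
  have N0: "0 \<in> N" unfolding N_def by simp
  have Nadd: "a + b \<in> N" if "a \<in> N" "b \<in> N" for a b using that unfolding N_def by (simp add: \<phi>.add)
  have NscaleR: "r *\<^sub>R a \<in> N" if "a \<in> N" for a r using that unfolding N_def by (simp add: \<phi>.scaleR)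
  have NscaleC: "scaleC c a \<in> N" if "a \<in> N" for a c using that unfolding N_def by (simp add: hom)
  define D where "D = (\<lambda>n. (norm (u - n))^2) ` N"
  define d where "d = Inf D"
  have Dne: "D \<noteq> {}" unfolding D_def using N0 by blast
  have Dbdd: "bdd_below D" unfolding D_def by (intro bdd_belowI[of _ 0]) auto
  have dle: "d \<le> (norm (u - n))^2" if "n \<in> N" for n
    unfolding d_def D_def using that Dbdd unfolding D_def by (intro cInf_lower) auto
  have "\<exists>n\<in>N. (norm (u - n))^2 < d + 1 / (real k + 1)" for k
  proof -
    have "Inf D < d + 1 / (real k + 1)" unfolding d_def by simp
    then obtain e where "e \<in> D" "e < d + 1 / (real k + 1)" using cInf_lessD[OF Dne] by blast
    then show ?thesis unfolding D_def by auto
  qed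
  then obtain s where sN: "\<And>k. s k \<in> N" and sd: "\<And>k. (norm (u - s k))^2 < d + 1 / (real k + 1)"
    by metis
  have cauchy_est: "(norm (s k - s m))^2 \<le> 2 / (real k + 1) + 2 / (real m + 1)" for k m
  proof -
    have mid: "(1/2) *\<^sub>R (s k + s m) \<in> N" using sN by (intro NscaleR Nadd)
    have "u - s k + (u - s m) = 2 *\<^sub>R (u - (1/2) *\<^sub>R (s k + s m))"
      by (simp add: algebra_simps scaleR_2)
    then have "(norm (u - s k + (u - s m)))^2 = 4 * (norm (u - (1/2) *\<^sub>R (s k + s m)))^2"
      by (simp add: power_mult_distrib)
    then have a: "(norm (u - s k + (u - s m)))^2 \<ge> 4 * d" using dle[OF mid] by simp
    have b: "(u - s k) - (u - s m) = s m - s k" by simp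
    have "(norm (s k - s m))^2 = (norm (s m - s k))^2" by (simp add: norm_minus_commute)
    also have "\<dots> = 2 * (norm (u - s k))^2 + 2 * (norm (u - s m))^2 - (norm (u - s k + (u - s m)))^2"
      using parallelogram[of "u - s k" "u - s m"] b by simp
    also have "\<dots> \<le> 2 * (d + 1 / (real k + 1)) + 2 * (d + 1 / (real m + 1)) - 4 * d"
      using sd[of k] sd[of m] a by simp
    finally show ?thesis by simp
  qed
  have "Cauchy s"
  proof (rule metric_CauchyI)
    fix e :: real assume e: "e > 0"
    obtain K :: nat where K: "4 / e^2 < real K" using reals_Archimedean2 by blast
    have "dist (s k) (s m) < e" if "k \<ge> K" "m \<ge> K" for k m
    proof -
      have e2: "e^2 > 0" using e by simp
      have "2 / (real k + 1) \<le> 2 / (real K + 1)" using that by (intro divide_left_mono) auto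
      moreover have "2 / (real m + 1) \<le> 2 / (real K + 1)" using that by (intro divide_left_mono) auto
      moreover have "4 / (real K + 1) < e^2"
      proof -
        have "4 < real K * e^2" using K e2 by (simp add: field_simps)
        then have "4 < real K * e^2 + e^2" using e2 by linarith
        then have "4 < (real K + 1) * e^2" by (simp add: distrib_right)
        then show ?thesis by (simp add: field_simps)
      qed
      ultimately have "(norm (s k - s m))^2 < e^2" using cauchy_est[of k m] by linarith
      then show ?thesis using e by (simp add: dist_norm power_less_imp_less_base)
    qed
    then show "\<exists>M. \<forall>m\<ge>M. \<forall>n\<ge>M. dist (s m) (s n) < e" by blast
  qed
  then obtain n0 where lim: "s \<longlonglongrightarrow> n0" using Cauchy_convergent_iff convergent_def by blast
  have n0N: "n0 \<in> N"
  proof -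
    have "(\<lambda>k. \<phi> (s k)) \<longlonglongrightarrow> \<phi> n0" using lim by (rule \<phi>.tendsto)
    moreover have "(\<lambda>k. \<phi> (s k)) = (\<lambda>k. 0)" using sN unfolding N_def by auto
    ultimately have "\<phi> n0 = 0" using LIMSEQ_unique tendsto_const by metis
    then show ?thesis unfolding N_def by simp
  qed
  define w where "w = u - n0"
  have wmin: "(norm w)^2 \<le> d"
  proof -
    have h1: "(\<lambda>k. 1 / (real k + 1)) \<longlonglongrightarrow> 0"
      using LIMSEQ_inverse_real_of_nat by (simp add: inverse_eq_divide add.commute)
    have "(\<lambda>k. (norm (u - s k))^2 - 1 / (real k + 1)) \<longlonglongrightarrow> (norm (u - n0))^2 - 0"
      by (intro tendsto_intros lim h1)
    moreover have "(norm (u - s k))^2 - 1 / (real k + 1) \<le> d" for k using sd[of k] by simp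
    ultimately show ?thesis unfolding w_def by (intro tendsto_upperbound) (auto intro: always_eventually)
  qed
  have w0: "w \<noteq> 0" using u n0N unfolding w_def N_def by auto
  have orth: "cinner w v = 0" if "v \<in> N" for v
  proof (cases "v = 0")
    case True then show ?thesis by simp
  next
    case False
    define c where "c = cinner w v / of_real ((norm v)^2)"
    have "n0 + scaleC c v \<in> N" using n0N that by (intro Nadd NscaleC)
    then have "d \<le> (norm (u - (n0 + scaleC c v)))^2" by (rule dle)
    also have "u - (n0 + scaleC c v) = w - scaleC c v" unfolding w_def by simp
    also have "(norm (w - scaleC c v))^2 = (norm w)^2 - (cmod (cinner w v))^2 / (norm v)^2"
      unfolding c_def by (rule proj_identity[OF False])
    finally have "(cmod (cinner w v))^2 / (norm v)^2 \<le> 0" using wmin by simp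
    then have "(cmod (cinner w v))^2 \<le> 0" using False by (simp add: divide_le_0_iff)
    then show ?thesis by simp
  qed
  show ?thesis
  proof (intro exI allI)
    fix x
    define y where "y = scaleC (\<phi> x) w - scaleC (\<phi> w) x"
    have "\<phi> y = 0" unfolding y_def by (simp add: \<phi>.diff hom)
    then have "cinner w y = 0" using orth unfolding N_def by simp
    then have "cinner y w = 0" by (metis cinner_commute complex_cnj_zero)
    then have "\<phi> x * cinner w w = \<phi> w * cinner x w"
      unfolding y_def by (simp add: cinner_diff_left cinner_scaleC_left)
    then have "\<phi> x = \<phi> w * cinner x w / of_real ((norm w)^2)"
      using w0 by (simp add: cinner_self field_simps)
    also have "\<dots> = cinner x (scaleC (cnj (\<phi> w) / of_real ((norm w)^2)) w)"
      by (simp add: cinner_scaleC_right)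
    finally show "\<phi> x = cinner x (scaleC (cnj (\<phi> w) / of_real ((norm w)^2)) w)" .
  qed
qed


inductive sos :: "real poly \<Rightarrow> bool" where
  sos0[simp]: "sos 0"
| sosS: "sos s \<Longrightarrow> sos (r*r + s)"

lemma sos_add: "sos a \<Longrightarrow> sos b \<Longrightarrow> sos (a+b)"
  by (induction a rule: sos.induct) (auto simp: add.assoc intro: sos.intros)

lemma sos_sq_mult: "sos b \<Longrightarrow> sos (r*r*b)"
proof (induction b rule: sos.induct)
  case sos0 then show ?case by (simp add: sos.intros)
next
  case (sosS s q)
  have "r * r * (q * q + s) = (r * q) * (r * q) + r * r * s" by (simp add: algebra_simps)
  then show ?case using sosS by (simp add: sos.intros)
qed

lemma sos_mult: "sos a \<Longrightarrow> sos b \<Longrightarrow> sos (a*b)"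
  by (induction a rule: sos.induct) (auto simp: distrib_right intro: sos_add sos_sq_mult)

lemma sos_sq: "sos (r*r)"
  using sosS[OF sos0, of r] by simp

lemma sos_const: "c \<ge> 0 \<Longrightarrow> sos [:c:]"
proof -
  assume "c \<ge> 0"
  then have "[:c:] = [:sqrt c:] * [:sqrt c:]" by simp
  then show ?thesis using sos_sq by metis
qed

definition Sm :: "real \<Rightarrow> real poly \<Rightarrow> bool" where
  "Sm M p \<longleftrightarrow> (\<exists>a b c. sos a \<and> sos b \<and> sos c \<and> p = a + [:0,1:]*b + [:M,-1:]*c)"

lemma Sm_sos: "sos a \<Longrightarrow> Sm M a"
  unfolding Sm_def by (rule exI[of _ a], rule exI[of _ 0], rule exI[of _ 0]) (simp add: sos0)

lemma XY_eq:
  fixes M :: real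
  assumes "M > 0"
  shows "[:0,1:]*[:M,-1:] = [:1/M:] * ([:0,1:]*([:M,-1:]*[:M,-1:])) + [:1/M:] * ([:M,-1:]*([:0,1:]*[:0,1:]))"
proof -
  have "[:0,1:]*([:M,-1:]*[:M,-1:]) + [:M,-1:]*([:0,1:]*[:0,1:]) = ([:0,1:]*[:M,-1:]) * ([:0,1:] + [:M,-1::real:])"
    by (simp add: algebra_simps)
  also have "[:0,1:] + [:M,-1::real:] = [:M:]" by simp
  finally have "[:1/M:] * ([:0,1:]*([:M,-1:]*[:M,-1:])) + [:1/M:] * ([:M,-1:]*([:0,1:]*[:0,1:]))
      = ([:0,1:]*[:M,-1:]) * ([:1/M:]*[:M:])"
    by (simp only: distrib_left[symmetric]) (simp add: algebra_simps)
  also have "[:1/M:]*[:M:] = (1::real poly)" using assms by (simp add: one_pCons)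
  finally show ?thesis by simp
qed

lemma Sm_mult:
  assumes M: "M > 0" and "Sm M p" "Sm M q"
  shows "Sm M (p*q)"
proof -
  obtain a b c where abc: "sos a" "sos b" "sos c" "p = a + [:0,1:]*b + [:M,-1:]*c"
    using assms(2) unfolding Sm_def by blast
  obtain a' b' c' where abc': "sos a'" "sos b'" "sos c'" "q = a' + [:0,1:]*b' + [:M,-1:]*c'"
    using assms(3) unfolding Sm_def by blast
  define X where "X = [:0,1::real:]"
  define Y where "Y = [:M,-1::real:]"
  define w where "w = b*c' + c*b'"
  have w: "sos w" unfolding w_def using abc abc' by (intro sos_add sos_mult)
  have "p*q = a*a' + X*X*(b*b') + Y*Y*(c*c') + X*(a*b'+b*a') + Y*(a*c'+c*a') + (X*Y)*w"
    unfolding abc abc' X_def[symmetric] Y_def[symmetric] w_def by (simp add: algebra_simps)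
  also have "X*Y = [:1/M:] * (X*(Y*Y)) + [:1/M:] * (Y*(X*X))"
    unfolding X_def Y_def by (rule XY_eq[OF M])
  finally have "p*q = (a*a' + X*X*(b*b') + Y*Y*(c*c'))
      + X*(a*b'+b*a' + [:1/M:]*(Y*Y*w)) + Y*(a*c'+c*a' + [:1/M:]*(X*X*w))"
    by (simp add: algebra_simps)
  moreover have "sos (a*a' + X*X*(b*b') + Y*Y*(c*c'))"
    using abc abc' by (intro sos_add sos_mult sos_sq_mult)
  moreover have "sos (a*b'+b*a' + [:1/M:]*(Y*Y*w))"
    using abc abc' w M by (intro sos_add sos_mult sos_sq_mult sos_const) auto
  moreover have "sos (a*c'+c*a' + [:1/M:]*(X*X*w))"
    using abc abc' w M by (intro sos_add sos_mult sos_sq_mult sos_const) auto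
  ultimately show ?thesis unfolding Sm_def X_def Y_def by blast
qed

lemma Sm_lin_left: "r \<le> 0 \<Longrightarrow> Sm M [:-r,1:]"
  unfolding Sm_def
  apply (rule exI[of _ "[:-r:]"], rule exI[of _ 1], rule exI[of _ 0])
  apply (auto intro: sos_const)
  using sos_sq[of 1] apply simp
  done

lemma Sm_lin_right: "r \<ge> M \<Longrightarrow> Sm M [:r,-1:]"
  unfolding Sm_def
  apply (rule exI[of _ "[:r-M:]"], rule exI[of _ 0], rule exI[of _ 1])
  apply (auto intro: sos_const simp: sos0)
  using sos_sq[of 1] apply simp
  done

lemma poly_nonneg_closure:
  fixes q :: "real poly"
  assumes "a < b" "\<forall>t\<in>{a<..<b}. poly q t \<ge> 0" "c \<in> {a..b}"
  shows "poly q c \<ge> 0"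
proof -
  have cl: "closed {t. 0 \<le> poly q t}"
    by (intro closed_Collect_le continuous_intros)
  have "{a<..<b} \<subseteq> {t. 0 \<le> poly q t}" using assms by auto
  then have "closure {a<..<b} \<subseteq> {t. 0 \<le> poly q t}"
    by (rule closure_minimal) (rule cl)
  then show ?thesis using assms by auto
qed

definition ev :: "real poly \<Rightarrow> complex \<Rightarrow> complex" where
  "ev p z = poly (map_poly complex_of_real p) z"

lemma ev_pCons[simp]: "ev (pCons a p) z = of_real a + z * ev p z"
  unfolding ev_def by (simp add: map_poly_pCons)

lemma ev_0[simp]: "ev 0 z = 0"
  unfolding ev_def by simp

lemma ev_add: "ev (p + q) z = ev p z + ev q z"
proof (induction p arbitrary: q rule: pCons_induct)
  case 0 then show ?case by (simp add: ev_def)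
next
  case (pCons a p)
  show ?case
  proof (cases q rule: pCons_cases)
    case (pCons b q')
    then show ?thesis using pCons.IH[of q'] by (simp add: ev_pCons algebra_simps)
  qed
qed

lemma ev_smult: "ev (smult c p) z = of_real c * ev p z"
  by (induction p) (simp_all add: algebra_simps)

lemma ev_mult: "ev (p * q) z = ev p z * ev q z"
  by (induction p) (simp_all add: ev_add ev_smult algebra_simps)

lemma ev_real: "ev p (of_real t) = of_real (poly p t)"
  by (induction p) simp_all

lemma Sm_mult_sos: "M > 0 \<Longrightarrow> Sm M p \<Longrightarrow> sos s \<Longrightarrow> Sm M (s * p)"
  using Sm_mult Sm_sos by blast


lemma real_root_factor:
  fixes p :: "real poly"
  assumes "poly p r = 0" "p \<noteq> 0"
  obtains q where "p = [:-r,1:] * q" "degree q < degree p"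
proof -
  obtain q where q: "p = [:-r,1:] * q" using assms(1) poly_eq_0_iff_dvd by (metis dvdE)
  then have "q \<noteq> 0" using assms(2) by auto
  have "degree ([:-r,1:] * q) = degree [:-r,1::real:] + degree q" by (rule degree_mult_eq) (use \<open>q \<noteq> 0\<close> in auto)
  then have "degree p = degree q + 1" using q by simp
  then show ?thesis using that q by simp
qed

lemma quad_root: "complex_of_real (Re z ^2 + Im z ^2) - 2 * complex_of_real (Re z) * z + z * z = 0"
  by (simp add: complex_eq_iff power2_eq_square)

lemma complex_root_factor:
  fixes p :: "real poly"
  assumes "ev p z = 0" "Im z \<noteq> 0" "p \<noteq> 0"
  obtains q where "p = [:(Re z ^2 + Im z ^2), -2 * Re z, 1:] * q" "degree q < degree p"
proof -
  define Q where "Q = [:(Re z ^2 + Im z ^2), -2 * Re z, 1::real:]"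
  have Q0: "Q \<noteq> 0" unfolding Q_def by simp
  have dQ: "degree Q = 2" unfolding Q_def by simp
  have evQ: "ev Q z = 0"
  proof -
    have "ev Q z = of_real (Re z ^2 + Im z ^2) + z * (of_real (-2 * Re z) + z * (1 + z * 0))"
      unfolding Q_def by (simp only: ev_pCons ev_0 of_real_1)
    also have "\<dots> = 0"
      by (simp add: complex_eq_iff power2_eq_square algebra_simps)
    finally show ?thesis .
  qed
  define m where "m = p mod Q"
  have pm: "p = Q * (p div Q) + m" unfolding m_def by simp
  have evm: "ev m z = 0"
  proof -
    have "ev p z = ev (Q * (p div Q) + m) z" using arg_cong[OF pm, of "\<lambda>p. ev p z"] .
    also have "\<dots> = ev Q z * ev (p div Q) z + ev m z" by (simp only: ev_add ev_mult)
    finally have "ev p z = ev Q z * ev (p div Q) z + ev m z" .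
    then show ?thesis using assms evQ by simp
  qed
  have m0: "m = 0"
  proof (rule ccontr)
    assume "m \<noteq> 0"
    then have dm: "degree m < 2" using degree_mod_less[OF Q0, of p] dQ unfolding m_def by auto
    define a where "a = coeff m 0"
    define b where "b = coeff m 1"
    have ab: "m = [:a, b:]"
    proof (rule poly_eqI)
      fix n show "coeff m n = coeff [:a, b:] n"
      proof (cases n)
        case 0 then show ?thesis unfolding a_def by simp
      next
        case (Suc k)
        then show ?thesis
        proof (cases k)
          case 0 then show ?thesis using Suc unfolding b_def by simp
        next
          case (Suc j)
          then have "coeff m n = 0" using \<open>n = Suc k\<close> dm by (intro coeff_eq_0) simp
          then show ?thesis using \<open>n = Suc k\<close> Suc by simp
        qed
      qed
    qed
    have "of_real a + z * of_real b = 0" using evm unfolding ab by simp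
    then have "Im (of_real a + z * of_real b) = 0" "Re (of_real a + z * of_real b) = 0" by simp_all
    then have "b = 0" "a = 0" using assms(2) by auto
    then show False using \<open>m \<noteq> 0\<close> ab by simp
  qed
  have pq: "p = Q * (p div Q)" using pm unfolding m0 add_0_right .
  have nz: "p div Q \<noteq> 0"
  proof
    assume h: "p div Q = 0"
    have "p = Q * (p div Q)" by (rule pq)
    also have "\<dots> = 0" using h by simp
    finally show False using assms(3) by simp
  qed
  have "degree p = degree (Q * (p div Q))" using arg_cong[OF pq, of degree] .
  also have "\<dots> = degree Q + degree (p div Q)" by (rule degree_mult_eq) (use Q0 nz in auto)
  finally have "degree p = 2 + degree (p div Q)" using dQ by simp
  then have dl: "degree (p div Q) < degree p" by simp
  show ?thesis using that[of "p div Q"] pq dl unfolding Q_def by blast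
qed

lemma sos_quad: "sos [:(Re z ^2 + Im z ^2), -2 * Re z, 1:]"
proof -
  have "[:(Re z ^2 + Im z ^2), -2 * Re z, 1:] = [:-Re z, 1:] * [:-Re z, 1:] + [:Im z:] * [:Im z:]"
    by (simp add: power2_eq_square)
  then show ?thesis by (metis sos_sq sosS)
qed

lemma Sm_nonneg:
  fixes M :: real
  assumes M: "M > 0"
  shows "(\<forall>t\<in>{0..M}. poly p t \<ge> 0) \<Longrightarrow> Sm M p"
proof (induction "degree p" arbitrary: p rule: less_induct)
  case less
  show ?case
  proof (cases "degree p = 0")
    case True
    then obtain c where c: "p = [:c:]" by (rule degree_eq_zeroE)
    have "poly p 0 \<ge> 0" using less.prems M by simp
    then have "c \<ge> 0" using c by simp
    then show ?thesis using c by (simp add: Sm_sos sos_const)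
  next
    case False
    then have p0: "p \<noteq> 0" by auto
    have "degree (map_poly complex_of_real p) = degree p"
      by (rule degree_map_poly) simp
    then have "\<not> constant (poly (map_poly complex_of_real p))"
      using False by (simp add: constant_degree)
    then obtain z where z: "ev p z = 0" unfolding ev_def using fundamental_theorem_of_algebra by blast
    show ?thesis
    proof (cases "Im z = 0")
      case False
      obtain q where q: "p = [:(Re z ^2 + Im z ^2), -2 * Re z, 1:] * q" "degree q < degree p"
        using complex_root_factor[OF z False p0] by blast
      have "poly q t \<ge> 0" if "t \<in> {0..M}" for t
      proof -
        have pos: "poly [:(Re z ^2 + Im z ^2), -2 * Re z, 1:] t > 0"
        proof -
          have "poly [:(Re z ^2 + Im z ^2), -2 * Re z, 1:] t = (Re z ^2 + Im z ^2) + t * (-2 * Re z + t)" by simp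
          also have "\<dots> = (t - Re z)^2 + (Im z)^2" by (simp add: power2_eq_square algebra_simps)
          also have "\<dots> > 0" using False by (simp add: add_nonneg_pos)
          finally show ?thesis .
        qed
        have "0 \<le> poly p t" using less.prems that by auto
        also have "\<dots> = poly [:(Re z ^2 + Im z ^2), -2 * Re z, 1:] t * poly q t" using q(1) by (simp only: poly_mult)
        finally show ?thesis using pos by (simp add: zero_le_mult_iff)
      qed
      then have "Sm M q" using less.hyps[OF q(2)] by blast
      then show ?thesis using Sm_mult_sos[OF M _ sos_quad, of q z] unfolding q(1)[symmetric] by simp
    next
      case True
      define r where "r = Re z"
      have zr: "z = of_real r" using True unfolding r_def by (simp add: complex_eq_iff)
      have pr: "poly p r = 0" using z ev_real[of p r] unfolding zr by simp
      obtain q where q: "p = [:-r,1:] * q" "degree q < degree p"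
        using real_root_factor[OF pr p0] by blast
      have pq: "poly p t = (t - r) * poly q t" for t
      proof -
        have "poly p t = poly [:-r,1:] t * poly q t" unfolding q(1) by (rule poly_mult)
        then show ?thesis by simp
      qed
      consider "r \<le> 0" | "r \<ge> M" | "0 < r \<and> r < M" by linarith
      then show ?thesis
      proof cases
        case 1
        have "\<forall>t\<in>{0<..<M}. poly q t \<ge> 0"
        proof
          fix t assume t: "t \<in> {0<..<M}"
          then have "0 \<le> poly p t" using less.prems by auto
          then have "0 \<le> (t - r) * poly q t" using pq[of t] by simp
          moreover have "t - r > 0" using t 1 by auto
          ultimately show "poly q t \<ge> 0" by (simp add: zero_le_mult_iff)
        qed
        then have "\<forall>t\<in>{0..M}. poly q t \<ge> 0" using poly_nonneg_closure M by blast
        then have "Sm M q" using less.hyps[OF q(2)] by blast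
        then have "Sm M ([:-r,1:] * q)" by (rule Sm_mult[OF M Sm_lin_left[OF 1]])
        then show ?thesis using q(1) by simp
      next
        case 2
        have "\<forall>t\<in>{0<..<M}. poly (-q) t \<ge> 0"
        proof
          fix t assume t: "t \<in> {0<..<M}"
          then have "0 \<le> poly p t" using less.prems by auto
          then have "0 \<le> (t - r) * poly q t" using pq[of t] by simp
          moreover have "t - r < 0" using t 2 by auto
          ultimately show "poly (-q) t \<ge> 0" by (simp add: zero_le_mult_iff)
        qed
        then have "\<forall>t\<in>{0..M}. poly (-q) t \<ge> 0" using poly_nonneg_closure M by blast
        moreover have "degree (-q) < degree p" using q by simp
        ultimately have "Sm M (-q)" using less.hyps by blast
        moreover have "p = [:r,-1:] * (-q)" using q(1) by simp
        moreover have "Sm M ([:r,-1:] * (-q))" by (rule Sm_mult[OF M Sm_lin_right[OF 2] \<open>Sm M (-q)\<close>])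
        ultimately show ?thesis by simp
      next
        case 3
        have "\<forall>t\<in>{r<..<M}. poly q t \<ge> 0"
        proof
          fix t assume t: "t \<in> {r<..<M}"
          then have "0 \<le> poly p t" using less.prems 3 by auto
          then have "0 \<le> (t - r) * poly q t" using pq[of t] by simp
          moreover have "t - r > 0" using t by auto
          ultimately show "poly q t \<ge> 0" by (simp add: zero_le_mult_iff)
        qed
        then have q1: "poly q r \<ge> 0" using poly_nonneg_closure[of r M q r] 3 by auto
        have "\<forall>t\<in>{0<..<r}. poly (-q) t \<ge> 0"
        proof
          fix t assume t: "t \<in> {0<..<r}"
          then have "0 \<le> poly p t" using less.prems 3 by auto
          then have "0 \<le> (t - r) * poly q t" using pq[of t] by simp
          moreover have "t - r < 0" using t by auto
          ultimately show "poly (-q) t \<ge> 0" by (simp add: zero_le_mult_iff)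
        qed
        then have "poly (-q) r \<ge> 0" using poly_nonneg_closure[of 0 r "-q" r] 3 by auto
        then have qr: "poly q r = 0" using q1 by simp
        have qne: "q \<noteq> 0" using q(1) p0 by auto
        obtain q2 where q2: "q = [:-r,1:] * q2" "degree q2 < degree q"
          using real_root_factor[OF qr qne] by blast
        have pq2: "p = ([:-r,1:] * [:-r,1:]) * q2" unfolding q(1) q2(1) by (simp only: mult.assoc)
        have nn: "poly q2 t \<ge> 0" if "t \<in> {0..M}" "t \<noteq> r" for t
        proof -
          have "0 \<le> poly p t" using less.prems that by auto
          also have "\<dots> = (t - r)^2 * poly q2 t" unfolding pq2 poly_mult by (simp add: power2_eq_square algebra_simps)
          finally show ?thesis using that by (simp add: zero_le_mult_iff)
        qed
        have a: "\<forall>t\<in>{0..r}. poly q2 t \<ge> 0"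
          using poly_nonneg_closure[of 0 r q2] nn 3 by auto
        have b: "\<forall>t\<in>{r..M}. poly q2 t \<ge> 0"
          using poly_nonneg_closure[of r M q2] nn 3 by auto
        have "\<forall>t\<in>{0..M}. poly q2 t \<ge> 0"
        proof
          fix t assume "t \<in> {0..M}"
          then show "poly q2 t \<ge> 0" using a b by (cases "t \<le> r") auto
        qed
        then have "Sm M q2" using less.hyps q2(2) q(2) by auto
        then have "Sm M (([:-r,1:] * [:-r,1:]) * q2)" by (rule Sm_mult_sos[OF M _ sos_sq])
        then show ?thesis using pq2 by simp
      qed
    qed
  qed
qed


lemma adj_unique:
  assumes "\<forall>x y. cinner (A x) y = cinner x (B y)"
  shows "adj A = B"
  unfolding adj_def
proof (rule the_equality)
  show "\<forall>x y. cinner (A x) y = cinner x (B y)" by (rule assms)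
next
  fix B' assume h: "\<forall>x y. cinner (A x) y = cinner x (B' y)"
  show "B' = B"
  proof
    fix y show "B' y = B y"
      by (rule cinner_ext_right) (metis h assms)
  qed
qed

lemma adj_exists:
  assumes "bounded_op A"
  shows "\<exists>B. \<forall>x y. cinner (A x) y = cinner x (B y)"
proof -
  have bl: "bounded_linear A" and hom: "\<And>c x. A (scaleC c x) = scaleC c (A x)"
    using assms unfolding bounded_op_def by auto
  have "\<forall>y. \<exists>z. \<forall>x. cinner (A x) y = cinner x z"
  proof
    fix y
    show "\<exists>z. \<forall>x. cinner (A x) y = cinner x z"
    proof (rule riesz)
      show "bounded_linear (\<lambda>x. cinner (A x) y)"
        using bounded_linear_compose[OF bounded_bilinear.bounded_linear_left[OF bounded_bilinear_cinner] bl] .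
      show "cinner (A (scaleC c x)) y = c * cinner (A x) y" for c x
        by (simp add: hom cinner_scaleC_left)
    qed
  qed
  then show ?thesis by metis
qed

lemma adj_prop:
  assumes "bounded_op A"
  shows "cinner (A x) y = cinner x (adj A y)"
proof -
  obtain B where B: "\<forall>x y. cinner (A x) y = cinner x (B y)" using adj_exists[OF assms] by blast
  then have "adj A = B" by (rule adj_unique)
  then show ?thesis using B by simp
qed

lemma adj_prop2:
  assumes "bounded_op A"
  shows "cinner (adj A y) x = cinner y (A x)"
  by (metis adj_prop[OF assms] cinner_commute)

lemma bounded_op_adj:
  assumes A: "bounded_op A"
  shows "bounded_op (adj A)"
proof -
  have bl: "bounded_linear A" using A unfolding bounded_op_def by auto
  obtain K where K: "\<And>x. norm (A x) \<le> norm x * K" "K > 0"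
    using bounded_linear.pos_bounded[OF bl] by blast
  have add: "adj A (y + z) = adj A y + adj A z" for y z
    by (rule cinner_ext) (simp add: adj_prop2[OF A] cinner_add_left)
  have sc: "adj A (r *\<^sub>R y) = r *\<^sub>R adj A y" for r y
    by (rule cinner_ext) (simp add: adj_prop2[OF A] cinner_scaleR_left)
  have scC: "adj A (scaleC c y) = scaleC c (adj A y)" for c y
    by (rule cinner_ext) (simp add: adj_prop2[OF A] cinner_scaleC_left)
  have bd: "norm (adj A y) \<le> norm y * K" for y
  proof (cases "adj A y = 0")
    case True then show ?thesis using K by simp
  next
    case False
    have "(norm (adj A y))^2 = Re (cinner (adj A y) (adj A y))" by (rule norm_sq_cinner)
    also have "\<dots> = Re (cinner y (A (adj A y)))" by (simp add: adj_prop2[OF A])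
    also have "\<dots> \<le> cmod (cinner y (A (adj A y)))" by (rule complex_Re_le_cmod)
    also have "\<dots> \<le> norm y * norm (A (adj A y))" by (rule Cauchy_Schwarz)
    also have "\<dots> \<le> norm y * (norm (adj A y) * K)" using K by (simp add: mult_left_mono)
    finally have "norm (adj A y) * norm (adj A y) \<le> (norm y * K) * norm (adj A y)"
      by (simp add: power2_eq_square algebra_simps)
    then show ?thesis using False by simp
  qed
  have "bounded_linear (adj A)"
    by (rule bounded_linear_intro[OF add sc bd])
  then show ?thesis unfolding bounded_op_def using scC by blast
qed

lemma adj_adj:
  assumes "bounded_op A"
  shows "adj (adj A) = A"
  by (rule adj_unique) (simp add: adj_prop2[OF assms])

section \<open>Positive operators\<close>

definition sadj :: "('a::chilbert \<Rightarrow> 'a) \<Rightarrow> bool" where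
  "sadj T \<longleftrightarrow> (\<forall>x y. cinner (T x) y = cinner x (T y))"

definition posop :: "('a::chilbert \<Rightarrow> 'a) \<Rightarrow> bool" where
  "posop P \<longleftrightarrow> bounded_linear P \<and> sadj P \<and> (\<forall>x. 0 \<le> Re (cinner (P x) x))"

lemma posop_AA:
  assumes A: "bounded_op A"
  shows "posop (adj A \<circ> A)" "cinner ((adj A \<circ> A) x) x = of_real ((norm (A x))^2)"
proof -
  have bl: "bounded_linear A" using A unfolding bounded_op_def by auto
  have bl2: "bounded_linear (adj A)" using bounded_op_adj[OF A] unfolding bounded_op_def by auto
  have e: "cinner (adj A (A x)) y = cinner (A x) (A y)" for x y
    by (simp add: adj_prop2[OF A])
  show "cinner ((adj A \<circ> A) x) x = of_real ((norm (A x))^2)"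
    by (simp add: e cinner_self del: of_real_power)
  have "bounded_linear (adj A \<circ> A)"
    unfolding comp_def by (rule bounded_linear_compose[OF bl2 bl])
  moreover have "sadj (adj A \<circ> A)" unfolding sadj_def
    by (simp add: adj_prop[OF A] adj_prop2[OF A])
  moreover have "0 \<le> Re (cinner ((adj A \<circ> A) x) x)" for x
    by (simp add: e cinner_self del: of_real_power)
  ultimately show "posop (adj A \<circ> A)" unfolding posop_def by blast
qed

section \<open>Polynomials of operators\<close>

lemma poly_op_sum:
  assumes "degree p \<le> n"
  shows "poly_op p P x = (\<Sum>k\<le>n. coeff p k *\<^sub>R (P ^^ k) x)"
  unfolding poly_op_def
  by (rule sum.mono_neutral_left) (use assms in \<open>auto simp: coeff_eq_0\<close>)

lemma poly_op_pCons:
  assumes "linear P"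
  shows "poly_op (pCons a p) P x = a *\<^sub>R x + P (poly_op p P x)"
proof -
  interpret linear P by fact
  have d: "degree (pCons a p) \<le> Suc (degree p)" by (simp add: degree_pCons_le)
  have "poly_op (pCons a p) P x = (\<Sum>k\<le>Suc (degree p). coeff (pCons a p) k *\<^sub>R (P ^^ k) x)"
    by (rule poly_op_sum[OF d])
  also have "\<dots> = a *\<^sub>R x + (\<Sum>k\<le>degree p. coeff p k *\<^sub>R (P ^^ Suc k) x)"
    by (subst sum.atMost_Suc_shift) simp
  also have "(\<Sum>k\<le>degree p. coeff p k *\<^sub>R (P ^^ Suc k) x) = P (\<Sum>k\<le>degree p. coeff p k *\<^sub>R (P ^^ k) x)"
    by (simp add: sum scale)
  finally show ?thesis unfolding poly_op_def by simp
qed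

lemma poly_op_0[simp]: "poly_op 0 P x = 0"
  unfolding poly_op_def by simp

lemma poly_op_add:
  "poly_op (p + q) P x = poly_op p P x + poly_op q P x"
proof -
  define n where "n = max (degree p) (degree q)"
  have "degree (p + q) \<le> n" unfolding n_def by (rule degree_add_le) auto
  then have "poly_op (p + q) P x = (\<Sum>k\<le>n. coeff (p+q) k *\<^sub>R (P ^^ k) x)" by (rule poly_op_sum)
  also have "\<dots> = (\<Sum>k\<le>n. coeff p k *\<^sub>R (P ^^ k) x) + (\<Sum>k\<le>n. coeff q k *\<^sub>R (P ^^ k) x)"
    by (simp add: scaleR_add_left sum.distrib)
  also have "\<dots> = poly_op p P x + poly_op q P x"
  proof -
    have "poly_op p P x = (\<Sum>k\<le>n. coeff p k *\<^sub>R (P ^^ k) x)" by (rule poly_op_sum) (simp add: n_def)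
    moreover have "poly_op q P x = (\<Sum>k\<le>n. coeff q k *\<^sub>R (P ^^ k) x)" by (rule poly_op_sum) (simp add: n_def)
    ultimately show ?thesis by simp
  qed
  finally show ?thesis .
qed

lemma poly_op_smult: "poly_op (smult c p) P x = c *\<^sub>R poly_op p P x"
proof -
  have "degree (smult c p) \<le> degree p" by (rule degree_smult_le)
  then have "poly_op (smult c p) P x = (\<Sum>k\<le>degree p. coeff (smult c p) k *\<^sub>R (P ^^ k) x)"
    by (rule poly_op_sum)
  also have "\<dots> = c *\<^sub>R poly_op p P x"
    unfolding poly_op_def by (simp add: scaleR_sum_right)
  finally show ?thesis .
qed

lemma poly_op_minus: "poly_op (- p) P x = - poly_op p P x"
  using poly_op_smult[of "-1" p P x] by simp

lemma poly_op_diff: "poly_op (p - q) P x = poly_op p P x - poly_op q P x"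
  using poly_op_add[of p "-q" P x] by (simp add: poly_op_minus)

lemma poly_op_mult:
  assumes "linear P"
  shows "poly_op (p * q) P x = poly_op p P (poly_op q P x)"
proof (induction p)
  case 0 then show ?case by simp
next
  case (pCons a p)
  have "poly_op (pCons a p * q) P x = poly_op (smult a q + pCons 0 (p * q)) P x"
    by simp
  also have "\<dots> = a *\<^sub>R poly_op q P x + P (poly_op p P (poly_op q P x))"
    by (simp add: poly_op_add poly_op_smult poly_op_pCons[OF assms] pCons.IH)
  also have "\<dots> = poly_op (pCons a p) P (poly_op q P x)"
    by (simp add: poly_op_pCons[OF assms])
  finally show ?case .
qed

lemma poly_op_const: "poly_op [:c:] P x = c *\<^sub>R x"
  unfolding poly_op_def by simp

lemma poly_op_one: "poly_op 1 P x = x"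
  unfolding poly_op_def by simp

lemma poly_op_X: "linear P \<Longrightarrow> poly_op [:0,1:] P x = P x"
  by (simp add: poly_op_pCons poly_op_const)

lemma poly_op_commute:
  "linear P \<Longrightarrow> poly_op p P (poly_op q P x) = poly_op q P (poly_op p P x)"
  by (metis poly_op_mult mult.commute)

lemma bounded_linear_poly_op:
  assumes "bounded_linear P"
  shows "bounded_linear (poly_op p P)"
proof (induction p)
  case 0 then show ?case by (simp add: bounded_linear_zero poly_op_def)
next
  case (pCons a p)
  have l: "linear P" using assms bounded_linear.linear by blast
  have "bounded_linear (\<lambda>x. a *\<^sub>R x + P (poly_op p P x))"
    by (intro bounded_linear_add bounded_linear_scaleR_right bounded_linear_compose[OF assms] pCons.IH)
  then show ?case by (simp add: poly_op_pCons[OF l])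
qed

lemma sadj_poly_op:
  assumes bl: "bounded_linear P" and s: "sadj P"
  shows "sadj (poly_op p P)"
proof (induction p)
  case 0 then show ?case unfolding sadj_def by simp
next
  case (pCons a p)
  have l: "linear P" using bl bounded_linear.linear by blast
  have "cinner (poly_op (pCons a p) P x) y = cinner x (poly_op (pCons a p) P y)" for x y
  proof -
    have "cinner (poly_op (pCons a p) P x) y = of_real a * cinner x y + cinner (poly_op p P x) (P y)"
      using s by (simp add: poly_op_pCons[OF l] cinner_add_left cinner_scaleR_left sadj_def)
    also have "\<dots> = of_real a * cinner x y + cinner x (poly_op p P (P y))"
      using pCons.IH by (simp add: sadj_def)
    also have "poly_op p P (P y) = P (poly_op p P y)"
      using poly_op_commute[OF l, of p "[:0,1:]"] by (simp add: poly_op_X[OF l])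
    finally show ?thesis
      by (simp add: poly_op_pCons[OF l] cinner_add_right cinner_scaleR_right)
  qed
  then show ?case unfolding sadj_def by blast
qed


lemma posopD:
  assumes "posop P"
  shows "bounded_linear P" "linear P" "sadj P" "\<And>x. 0 \<le> Re (cinner (P x) x)"
  using assms unfolding posop_def by (auto intro: bounded_linear.linear)

lemma Re_le_onorm:
  assumes "posop P"
  shows "Re (cinner (P y) y) \<le> onorm P * (norm y)^2"
proof -
  have "Re (cinner (P y) y) \<le> cmod (cinner (P y) y)" by (rule complex_Re_le_cmod)
  also have "\<dots> \<le> norm (P y) * norm y" by (rule Cauchy_Schwarz)
  also have "\<dots> \<le> onorm P * norm y * norm y"
    using onorm[OF posopD(1)[OF assms], of y] by (simp add: mult_right_mono)
  finally show ?thesis by (simp add: power2_eq_square mult.assoc)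
qed

lemma sos_pos_aux:
  assumes P: "posop P" and q: "\<And>y. 0 \<le> Re (cinner (poly_op q P y) y)" and s: "sos s"
  shows "0 \<le> Re (cinner (poly_op (q * s) P x) x)"
  using s
proof (induction s rule: sos.induct)
  case sos0 then show ?case by simp
next
  case (sosS s r)
  have l: "linear P" using posopD[OF P] by blast
  have "q * (r * r + s) = r * (q * r) + q * s" by (simp add: algebra_simps)
  then have "poly_op (q * (r * r + s)) P x = poly_op r P (poly_op q P (poly_op r P x)) + poly_op (q * s) P x"
    by (simp add: poly_op_add poly_op_mult[OF l])
  moreover have "cinner (poly_op r P (poly_op q P (poly_op r P x))) x
      = cinner (poly_op q P (poly_op r P x)) (poly_op r P x)"
    using sadj_poly_op[OF posopD(1,3)[OF P], of r] unfolding sadj_def by simp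
  ultimately show ?case using sosS.IH q[of "poly_op r P x"] by (simp add: cinner_add_left)
qed

lemma Sm_pos:
  assumes P: "posop P" and M: "onorm P \<le> M" and p: "Sm M p"
  shows "0 \<le> Re (cinner (poly_op p P x) x)"
proof -
  have l: "linear P" using posopD[OF P] by blast
  obtain a b c where abc: "sos a" "sos b" "sos c" "p = a + [:0,1:]*b + [:M,-1:]*c"
    using p unfolding Sm_def by blast
  have q1: "0 \<le> Re (cinner (poly_op 1 P y) y)" for y by (simp add: poly_op_one cinner_self)
  have qX: "0 \<le> Re (cinner (poly_op [:0,1:] P y) y)" for y by (simp add: poly_op_X[OF l] posopD(4)[OF P])
  have qY: "0 \<le> Re (cinner (poly_op [:M,-1:] P y) y)" for y
  proof -
    interpret linear P by (rule l)
    have "poly_op [:M,-1:] P y = M *\<^sub>R y - P y"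
      by (simp add: poly_op_pCons[OF l] poly_op_const linear_neg[OF l])
    then have "Re (cinner (poly_op [:M,-1:] P y) y) = M * (norm y)^2 - Re (cinner (P y) y)"
      by (simp add: cinner_diff_left cinner_scaleR_left cinner_self)
    moreover have "Re (cinner (P y) y) \<le> M * (norm y)^2"
      using Re_le_onorm[OF P, of y] M by (meson mult_right_mono order_trans zero_le_power2)
    ultimately show ?thesis by simp
  qed
  have "poly_op p P x = poly_op (1 * a) P x + poly_op ([:0,1:]*b) P x + poly_op ([:M,-1:]*c) P x"
    unfolding abc(4) by (simp add: poly_op_add)
  then show ?thesis
    using sos_pos_aux[OF P q1 abc(1), of x] sos_pos_aux[OF P qX abc(2), of x] sos_pos_aux[OF P qY abc(3), of x]
    by (simp add: cinner_add_left)
qed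

lemma poly_op_zero_op:
  assumes "linear P" "\<And>y. P y = 0"
  shows "poly_op p P x = poly p 0 *\<^sub>R x"
proof (induction p)
  case 0 show ?case by simp
next
  case (pCons a p)
  have "poly_op (pCons a p) P x = a *\<^sub>R x + P (poly_op p P x)" by (rule poly_op_pCons[OF assms(1)])
  also have "P (poly_op p P x) = 0" by (rule assms(2))
  finally show ?case by simp
qed

lemma poly_nonneg_op:
  assumes P: "posop P" and nn: "\<forall>t\<in>{0..onorm P}. 0 \<le> poly p t"
  shows "0 \<le> Re (cinner (poly_op p P x) x)"
proof (cases "onorm P = 0")
  case True
  then have z: "\<And>y. P y = 0" using onorm_eq_0[OF posopD(1)[OF P]] by blast
  have "poly_op p P x = poly p 0 *\<^sub>R x" by (rule poly_op_zero_op[OF posopD(2)[OF P] z])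
  moreover have "0 \<le> poly p 0" using nn True by simp
  ultimately show ?thesis by (simp add: cinner_scaleR_left cinner_self)
next
  case False
  then have "onorm P > 0" using onorm_pos_le[OF posopD(1)[OF P]] by linarith
  then have "Sm (onorm P) p" using Sm_nonneg nn by blast
  then show ?thesis by (rule Sm_pos[OF P order_refl])
qed

lemma poly_norm_bound:
  assumes P: "posop P" and b: "\<forall>t\<in>{0..onorm P}. \<bar>poly p t\<bar> \<le> m"
  shows "norm (poly_op p P x) \<le> m * norm x"
proof -
  have l: "linear P" using posopD[OF P] by blast
  have m0: "0 \<le> m" using b onorm_pos_le[OF posopD(1)[OF P]] by force
  define q where "q = [:m*m:] - p * p"
  have "\<forall>t\<in>{0..onorm P}. 0 \<le> poly q t"
  proof
    fix t assume "t \<in> {0..onorm P}"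
    then have "\<bar>poly p t\<bar> \<le> \<bar>m\<bar>" using b m0 by auto
    then have "(poly p t)^2 \<le> m^2" by (simp add: abs_le_square_iff)
    then show "0 \<le> poly q t" unfolding q_def by (simp add: power2_eq_square)
  qed
  then have "0 \<le> Re (cinner (poly_op q P x) x)" by (rule poly_nonneg_op[OF P])
  moreover have "poly_op q P x = (m*m) *\<^sub>R x - poly_op p P (poly_op p P x)"
    unfolding q_def by (simp add: poly_op_diff poly_op_const poly_op_mult[OF l])
  moreover have "cinner (poly_op p P (poly_op p P x)) x = cinner (poly_op p P x) (poly_op p P x)"
    using sadj_poly_op[OF posopD(1,3)[OF P], of p] unfolding sadj_def by simp
  ultimately have "(norm (poly_op p P x))^2 \<le> (m * norm x)^2"
    by (simp add: cinner_diff_left cinner_scaleR_left cinner_self power2_eq_square mult_ac)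
  then show ?thesis using m0 by (simp add: power2_le_iff_abs_le)
qed

lemma poly_onorm_bound:
  assumes P: "posop P" and b: "\<forall>t\<in>{0..onorm P}. \<bar>poly p t\<bar> \<le> m"
  shows "onorm (poly_op p P) \<le> m"
proof -
  have m0: "0 \<le> m" using b onorm_pos_le[OF posopD(1)[OF P]] by force
  show ?thesis using poly_norm_bound[OF P b] m0 by (intro onorm_bound) auto
qed


lemma weierstrass_seq:
  fixes f :: "real \<Rightarrow> real"
  assumes "continuous_on {a..b} f"
  shows "\<exists>p::nat \<Rightarrow> real poly. uniform_limit {a..b} (\<lambda>n t. poly (p n) t) f sequentially"
proof -
  have "\<forall>n::nat. \<exists>q::real poly. \<forall>t\<in>{a..b}. \<bar>f t - poly q t\<bar> < 1 / (real n + 1)"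
  proof
    fix n :: nat
    have e: "(0::real) < 1 / (real n + 1)" by simp
    obtain g where g: "real_polynomial_function g" "\<And>x. x \<in> {a..b} \<Longrightarrow> \<bar>f x - g x\<bar> < 1 / (real n + 1)"
      using Stone_Weierstrass_real_polynomial_function[OF compact_Icc assms e] by blast
    obtain c k where gk: "g = (\<lambda>x. \<Sum>i\<le>k. c i * x^i)"
      using real_polynomial_function_imp_sum[OF g(1)] by blast
    have "poly (\<Sum>i\<le>k. monom (c i) i) x = g x" for x by (simp add: gk poly_sum poly_monom)
    then show "\<exists>q::real poly. \<forall>t\<in>{a..b}. \<bar>f t - poly q t\<bar> < 1 / (real n + 1)"
      using g(2) by (intro exI[of _ "\<Sum>i\<le>k. monom (c i) i"]) auto
  qed
  then obtain p where p: "\<And>n t. t \<in> {a..b} \<Longrightarrow> \<bar>f t - poly (p n) t\<bar> < 1 / (real n + 1)"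
    by metis
  have "uniform_limit {a..b} (\<lambda>n t. poly (p n) t) f sequentially"
  proof (rule uniform_limitI)
    fix e :: real assume "e > 0"
    then obtain N :: nat where N: "N > 0" "inverse (real N) < e" using ex_inverse_of_nat_less by blast
    show "\<forall>\<^sub>F n in sequentially. \<forall>t\<in>{a..b}. dist (poly (p n) t) (f t) < e"
    proof (rule eventually_sequentiallyI[of N], intro ballI)
      fix n t assume n: "N \<le> n" and t: "t \<in> {a..b}"
      have "1 / (real n + 1) \<le> 1 / real N" using N n by (intro divide_left_mono) auto
      then have "1 / (real n + 1) < e" using N by (simp add: inverse_eq_divide)
      then show "dist (poly (p n) t) (f t) < e" using p[OF t, of n] by (simp add: dist_real_def abs_minus_commute)
    qed
  qed
  then show ?thesis by blast
qed

lemma uniform_close: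
  fixes p q :: "nat \<Rightarrow> real poly" and f :: "real \<Rightarrow> real" and e :: real
  assumes "uniform_limit S (\<lambda>n t. poly (p n) t) f sequentially"
    and "uniform_limit S (\<lambda>n t. poly (q n) t) f sequentially" and "e > 0"
  shows "eventually (\<lambda>n. \<forall>t\<in>S. \<bar>poly (p n) t - poly (q n) t\<bar> \<le> e) sequentially"
proof -
  have "e/2 > 0" using assms by simp
  from uniform_limitD[OF assms(1) this] uniform_limitD[OF assms(2) this]
  have "eventually (\<lambda>n. (\<forall>t\<in>S. dist (poly (p n) t) (f t) < e/2) \<and> (\<forall>t\<in>S. dist (poly (q n) t) (f t) < e/2)) sequentially"
    by (rule eventually_conj)
  then show ?thesis
  proof (rule eventually_mono)
    fix n assume h: "(\<forall>t\<in>S. dist (poly (p n) t) (f t) < e/2) \<and> (\<forall>t\<in>S. dist (poly (q n) t) (f t) < e/2)"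
    show "\<forall>t\<in>S. \<bar>poly (p n) t - poly (q n) t\<bar> \<le> e"
    proof
      fix t assume "t \<in> S"
      then have "\<bar>poly (p n) t - f t\<bar> < e/2" "\<bar>poly (q n) t - f t\<bar> < e/2" using h by (auto simp: dist_real_def)
      then show "\<bar>poly (p n) t - poly (q n) t\<bar> \<le> e" by linarith
    qed
  qed
qed

lemma onorm_diff_tends:
  assumes P: "posop P"
    and p: "uniform_limit {0..onorm P} (\<lambda>n t. poly (p n) t) f sequentially"
    and q: "uniform_limit {0..onorm P} (\<lambda>n t. poly (q n) t) f sequentially"
  shows "(\<lambda>n. onorm (\<lambda>x. poly_op (p n) P x - poly_op (q n) P x)) \<longlonglongrightarrow> 0"
proof -
  have bl: "bounded_linear P" using posopD[OF P] by blast
  have eq: "(\<lambda>x. poly_op (p n) P x - poly_op (q n) P x) = poly_op (p n - q n) P" for n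
    by (rule ext) (simp add: poly_op_diff)
  show ?thesis unfolding eq
  proof (rule Lim_null_comparison)
    show "(\<lambda>n. onorm (poly_op (p n - q n) P)) \<longlonglongrightarrow> (0::real)"
    proof (rule tendstoI)
      fix e :: real assume e: "e > 0"
      then have "e/2 > 0" by simp
      from uniform_close[OF p q this]
      show "eventually (\<lambda>n. dist (onorm (poly_op (p n - q n) P)) 0 < e) sequentially"
      proof (rule eventually_mono)
        fix n assume "\<forall>t\<in>{0..onorm P}. \<bar>poly (p n) t - poly (q n) t\<bar> \<le> e/2"
        then have "onorm (poly_op (p n - q n) P) \<le> e/2" by (intro poly_onorm_bound[OF P]) simp
        moreover have "0 \<le> onorm (poly_op (p n - q n) P)" by (rule onorm_pos_le[OF bounded_linear_poly_op[OF bl]])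
        ultimately show "dist (onorm (poly_op (p n - q n) P)) 0 < e" using e by simp
      qed
    qed
  qed (intro always_eventually allI, simp add: onorm_pos_le[OF bounded_linear_poly_op[OF bl]])
qed

definition good :: "('a::chilbert \<Rightarrow> 'a) \<Rightarrow> (real \<Rightarrow> real) \<Rightarrow> ('a \<Rightarrow> 'a) \<Rightarrow> bool" where
  "good P f T \<longleftrightarrow> bounded_linear T \<and>
     (\<forall>p :: nat \<Rightarrow> real poly.
        uniform_limit {0..onorm P} (\<lambda>n t. poly (p n) t) f sequentially \<longrightarrow>
        (\<lambda>n. onorm (\<lambda>x. poly_op (p n) P x - T x)) \<longlonglongrightarrow> 0)"

lemma fcalc_eq_the: "fcalc f P = (THE T. good P f T)"
  unfolding fcalc_def good_def ..

lemma good_exists: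
  assumes P: "posop P" and f: "continuous_on {0..onorm P} f"
  shows "\<exists>T. good P f T"
proof -
  have bl: "bounded_linear P" using posopD[OF P] by blast
  obtain p where p: "uniform_limit {0..onorm P} (\<lambda>n t. poly (p n) t) f sequentially"
    using weierstrass_seq[OF f] by blast
  define L where "L n = Blinfun (poly_op (p n) P)" for n
  have La: "blinfun_apply (L n) = poly_op (p n) P" for n
    unfolding L_def by (rule bounded_linear_Blinfun_apply[OF bounded_linear_poly_op[OF bl]])
  have dL: "dist (L m) (L n) = onorm (\<lambda>x. poly_op (p m) P x - poly_op (p n) P x)" for m n
    by (simp add: dist_norm norm_blinfun.rep_eq minus_blinfun.rep_eq La fun_diff_def)
  have "Cauchy L"
  proof (rule metric_CauchyI)
    fix e :: real assume e: "e > 0"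
    have "e/4 > 0" using e by simp
    from uniform_limitD[OF p this] obtain N where N: "\<And>n. n \<ge> N \<Longrightarrow> \<forall>t\<in>{0..onorm P}. dist (poly (p n) t) (f t) < e/4"
      by (auto simp: eventually_sequentially)
    have "dist (L m) (L n) < e" if "m \<ge> N" "n \<ge> N" for m n
    proof -
      have "\<forall>t\<in>{0..onorm P}. \<bar>poly (p m - p n) t\<bar> \<le> e/2"
      proof
        fix t assume t: "t \<in> {0..onorm P}"
        have "\<bar>poly (p m) t - f t\<bar> < e/4" "\<bar>poly (p n) t - f t\<bar> < e/4"
          using N[OF that(1)] N[OF that(2)] t by (auto simp: dist_real_def)
        moreover have "\<bar>poly (p m - p n) t\<bar> \<le> \<bar>poly (p m) t - f t\<bar> + \<bar>poly (p n) t - f t\<bar>"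
          using abs_triangle_ineq4[of "poly (p m) t - f t" "poly (p n) t - f t"] by simp
        ultimately show "\<bar>poly (p m - p n) t\<bar> \<le> e/2" by linarith
      qed
      then have "onorm (poly_op (p m - p n) P) \<le> e/2" by (rule poly_onorm_bound[OF P])
      moreover have "(\<lambda>x. poly_op (p m) P x - poly_op (p n) P x) = poly_op (p m - p n) P"
        by (rule ext) (simp add: poly_op_diff)
      ultimately show ?thesis using dL[of m n] e by simp
    qed
    then show "\<exists>M. \<forall>m\<ge>M. \<forall>n\<ge>M. dist (L m) (L n) < e" by blast
  qed
  then obtain L0 where L0: "L \<longlonglongrightarrow> L0" using Cauchy_convergent_iff convergent_def by blast
  define T where "T = blinfun_apply L0"
  have nT: "norm (L n - L0) = onorm (\<lambda>x. poly_op (p n) P x - T x)" for n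
    by (simp add: norm_blinfun.rep_eq minus_blinfun.rep_eq La T_def fun_diff_def)
  have LT: "(\<lambda>n. onorm (\<lambda>x. poly_op (p n) P x - T x)) \<longlonglongrightarrow> 0"
  proof -
    have "(\<lambda>n. L n - L0) \<longlonglongrightarrow> 0" using L0 by (rule LIM_zero)
    then have "(\<lambda>n. norm (L n - L0)) \<longlonglongrightarrow> 0" by (rule tendsto_norm_zero)
    then show ?thesis unfolding nT .
  qed
  have "good P f T"
    unfolding good_def
  proof (intro conjI allI impI)
    show "bounded_linear T" unfolding T_def by (rule blinfun.bounded_linear_right)
    fix q assume q: "uniform_limit {0..onorm P} (\<lambda>n t. poly (q n) t) f sequentially"
    have blT: "bounded_linear T" unfolding T_def by (rule blinfun.bounded_linear_right)
    have tri: "onorm (\<lambda>x. poly_op (q n) P x - T x)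
        \<le> onorm (\<lambda>x. poly_op (q n) P x - poly_op (p n) P x) + onorm (\<lambda>x. poly_op (p n) P x - T x)" for n
    proof -
      have "onorm (\<lambda>x. (poly_op (q n) P x - poly_op (p n) P x) + (poly_op (p n) P x - T x))
          \<le> onorm (\<lambda>x. poly_op (q n) P x - poly_op (p n) P x) + onorm (\<lambda>x. poly_op (p n) P x - T x)"
        by (intro onorm_triangle bounded_linear_sub bounded_linear_poly_op[OF bl] blT)
      then show ?thesis by simp
    qed
    show "(\<lambda>n. onorm (\<lambda>x. poly_op (q n) P x - T x)) \<longlonglongrightarrow> 0"
    proof (rule Lim_null_comparison)
      show "eventually (\<lambda>n. norm (onorm (\<lambda>x. poly_op (q n) P x - T x))
          \<le> onorm (\<lambda>x. poly_op (q n) P x - poly_op (p n) P x) + onorm (\<lambda>x. poly_op (p n) P x - T x)) sequentially"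
        using tri onorm_pos_le[OF bounded_linear_sub[OF bounded_linear_poly_op[OF bl] blT]]
        by (intro always_eventually allI) simp
      show "(\<lambda>n. onorm (\<lambda>x. poly_op (q n) P x - poly_op (p n) P x) + onorm (\<lambda>x. poly_op (p n) P x - T x)) \<longlonglongrightarrow> 0"
        using tendsto_add[OF onorm_diff_tends[OF P q p] LT] by simp
    qed
  qed
  then show ?thesis by blast
qed

lemma good_unique:
  assumes P: "posop P" and f: "continuous_on {0..onorm P} f"
    and T1: "good P f T1" and T2: "good P f T2"
  shows "T1 = T2"
proof -
  have bl: "bounded_linear P" using posopD[OF P] by blast
  obtain p where p: "uniform_limit {0..onorm P} (\<lambda>n t. poly (p n) t) f sequentially"
    using weierstrass_seq[OF f] by blast
  have b1: "bounded_linear T1" and l1: "(\<lambda>n. onorm (\<lambda>x. poly_op (p n) P x - T1 x)) \<longlonglongrightarrow> 0"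
    using T1 p unfolding good_def by auto
  have b2: "bounded_linear T2" and l2: "(\<lambda>n. onorm (\<lambda>x. poly_op (p n) P x - T2 x)) \<longlonglongrightarrow> 0"
    using T2 p unfolding good_def by auto
  have le: "onorm (\<lambda>x. T1 x - T2 x) \<le> onorm (\<lambda>x. poly_op (p n) P x - T2 x) + onorm (\<lambda>x. poly_op (p n) P x - T1 x)" for n
  proof -
    have "onorm (\<lambda>x. (poly_op (p n) P x - T2 x) + - (poly_op (p n) P x - T1 x))
       \<le> onorm (\<lambda>x. poly_op (p n) P x - T2 x) + onorm (\<lambda>x. - (poly_op (p n) P x - T1 x))"
      by (intro onorm_triangle bounded_linear_sub bounded_linear_minus bounded_linear_poly_op[OF bl] b1 b2)
    moreover have "onorm (\<lambda>x. T1 x - poly_op (p n) P x) = onorm (\<lambda>x. poly_op (p n) P x - T1 x)"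
      using onorm_neg[of "\<lambda>x. poly_op (p n) P x - T1 x"] by simp
    ultimately show ?thesis by simp
  qed
  have "onorm (\<lambda>x. T1 x - T2 x) \<le> 0"
  proof (rule tendsto_lowerbound)
    show "(\<lambda>n. onorm (\<lambda>x. poly_op (p n) P x - T2 x) + onorm (\<lambda>x. poly_op (p n) P x - T1 x)) \<longlonglongrightarrow> 0"
      using tendsto_add[OF l2 l1] by simp
    show "eventually (\<lambda>n. onorm (\<lambda>x. T1 x - T2 x) \<le> onorm (\<lambda>x. poly_op (p n) P x - T2 x) + onorm (\<lambda>x. poly_op (p n) P x - T1 x)) sequentially"
      using le by simp
  qed simp
  then have "onorm (\<lambda>x. T1 x - T2 x) = 0" using onorm_pos_le[OF bounded_linear_sub[OF b1 b2]] by linarith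
  then have "\<forall>x. T1 x - T2 x = 0" using onorm_eq_0[OF bounded_linear_sub[OF b1 b2]] by blast
  then show ?thesis by auto
qed

lemma fcalc_good:
  assumes P: "posop P" and f: "continuous_on {0..onorm P} f"
  shows "good P f (fcalc f P)"
proof -
  obtain T where T: "good P f T" using good_exists[OF P f] by blast
  have "fcalc f P = T" unfolding fcalc_eq_the
    by (rule the_equality[of "good P f" T, OF T]) (rule good_unique[OF P f _ T])
  then show ?thesis using T by simp
qed

lemma fcalc_bl:
  assumes P: "posop P" and f: "continuous_on {0..onorm P} f"
  shows "bounded_linear (fcalc f P)"
  using fcalc_good[OF P f] unfolding good_def by blast

lemma fcalc_lim:
  assumes P: "posop P" and f: "continuous_on {0..onorm P} f"
    and p: "uniform_limit {0..onorm P} (\<lambda>n t. poly (p n) t) f sequentially"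
  shows "(\<lambda>n. poly_op (p n) P x) \<longlonglongrightarrow> fcalc f P x"
proof -
  have bl: "bounded_linear P" using posopD[OF P] by blast
  have l: "(\<lambda>n. onorm (\<lambda>x. poly_op (p n) P x - fcalc f P x)) \<longlonglongrightarrow> 0"
    using fcalc_good[OF P f] p unfolding good_def by blast
  have "(\<lambda>n. poly_op (p n) P x - fcalc f P x) \<longlonglongrightarrow> 0"
  proof (rule Lim_null_comparison)
    show "eventually (\<lambda>n. norm (poly_op (p n) P x - fcalc f P x) \<le> onorm (\<lambda>x. poly_op (p n) P x - fcalc f P x) * norm x) sequentially"
      by (intro always_eventually allI onorm[of "\<lambda>x. poly_op _ P x - fcalc f P x", simplified]
          bounded_linear_sub bounded_linear_poly_op[OF bl] fcalc_bl[OF P f])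
    show "(\<lambda>n. onorm (\<lambda>x. poly_op (p n) P x - fcalc f P x) * norm x) \<longlonglongrightarrow> 0"
      using tendsto_mult[OF l tendsto_const[of "norm x"]] by simp
  qed
  then show ?thesis by (rule LIM_zero_cancel)
qed


lemma uniform_limit_const_poly: "uniform_limit S (\<lambda>n t. poly q t) (poly q) F"
  by (rule uniform_limitI) simp

lemma fcalc_poly:
  assumes P: "posop P"
  shows "fcalc (poly q) P = poly_op q P"
proof
  fix x
  have c: "continuous_on {0..onorm P} (poly q)" by (intro continuous_intros)
  have "(\<lambda>n. poly_op q P x) \<longlonglongrightarrow> fcalc (poly q) P x"
    using fcalc_lim[OF P c uniform_limit_const_poly[where q=q]] by simp
  then show "fcalc (poly q) P x = poly_op q P x" using LIMSEQ_unique tendsto_const by blast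
qed

lemma poly_X_fun: "poly [:0,1:] = (\<lambda>t::real. t)"
  by (rule ext) simp

lemma fcalc_id:
  assumes P: "posop P"
  shows "fcalc (\<lambda>t. t) P = P"
proof -
  have "fcalc (\<lambda>t. t) P = poly_op [:0,1:] P" using fcalc_poly[OF P, of "[:0,1:]"] by (simp add: poly_X_fun)
  also have "\<dots> = P" by (rule ext) (simp add: poly_op_X[OF posopD(2)[OF P]])
  finally show ?thesis .
qed

lemma fcalc_sq:
  assumes P: "posop P"
  shows "fcalc (\<lambda>t. t^2) P x = P (P x)"
proof -
  have e: "(\<lambda>t::real. t^2) = poly ([:0,1:] * [:0,1:])" by (rule ext) (simp add: power2_eq_square)
  have l: "linear P" using posopD[OF P] by blast
  show ?thesis unfolding e fcalc_poly[OF P] by (simp only: poly_op_mult[OF l] poly_op_X[OF l])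
qed

lemma cinner_tendsto_left:
  "(f \<longlonglongrightarrow> a) \<Longrightarrow> ((\<lambda>n. cinner (f n) y) \<longlonglongrightarrow> cinner a y)"
  by (rule bounded_bilinear.tendsto[OF bounded_bilinear_cinner]) (auto intro: tendsto_const)

lemma fcalc_ineq:
  assumes P: "posop P" and cu: "continuous_on {0..onorm P} u" and cv: "continuous_on {0..onorm P} v"
    and h: "\<And>t. t \<in> {0..onorm P} \<Longrightarrow> a + c * v t \<le> u t"
  shows "a * (norm x)^2 + c * Re (cinner (fcalc v P x) x) \<le> Re (cinner (fcalc u P x) x)"
proof -
  obtain p where p: "uniform_limit {0..onorm P} (\<lambda>n t. poly (p n) t) u sequentially"
    using weierstrass_seq[OF cu] by blast
  obtain q where q: "uniform_limit {0..onorm P} (\<lambda>n t. poly (q n) t) v sequentially"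
    using weierstrass_seq[OF cv] by blast
  define H where "H = Re (cinner (fcalc u P x) x) - c * Re (cinner (fcalc v P x) x)"
  have lim: "(\<lambda>n. Re (cinner (poly_op (p n) P x) x) - c * Re (cinner (poly_op (q n) P x) x)) \<longlonglongrightarrow> H"
    unfolding H_def
    by (intro tendsto_intros cinner_tendsto_left fcalc_lim[OF P cu p] fcalc_lim[OF P cv q])
  have "a * (norm x)^2 \<le> H + e" if e: "e > 0" for e
  proof -
    define K where "K = (1 + \<bar>c\<bar>) * ((norm x)^2 + 1)"
    have K: "K > 0" unfolding K_def by (intro mult_pos_pos add_pos_nonneg add_nonneg_pos) auto
    define \<epsilon> where "\<epsilon> = e / K"
    have \<epsilon>: "\<epsilon> > 0" unfolding \<epsilon>_def using e K by simp
    have ev: "eventually (\<lambda>n. (\<forall>t\<in>{0..onorm P}. dist (poly (p n) t) (u t) < \<epsilon>) \<and>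
                             (\<forall>t\<in>{0..onorm P}. dist (poly (q n) t) (v t) < \<epsilon>)) sequentially"
      by (rule eventually_conj[OF uniform_limitD[OF p \<epsilon>] uniform_limitD[OF q \<epsilon>]])
    have "eventually (\<lambda>n. a * (norm x)^2 - (1 + \<bar>c\<bar>) * \<epsilon> * (norm x)^2
        \<le> Re (cinner (poly_op (p n) P x) x) - c * Re (cinner (poly_op (q n) P x) x)) sequentially"
      using ev
    proof (rule eventually_mono)
      fix n
      assume hn: "(\<forall>t\<in>{0..onorm P}. dist (poly (p n) t) (u t) < \<epsilon>) \<and>
                  (\<forall>t\<in>{0..onorm P}. dist (poly (q n) t) (v t) < \<epsilon>)"
      define r where "r = p n - smult c (q n) - [:a:] + [:(1 + \<bar>c\<bar>) * \<epsilon>:]"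
      have "\<forall>t\<in>{0..onorm P}. 0 \<le> poly r t"
      proof
        fix t assume t: "t \<in> {0..onorm P}"
        have d1: "\<bar>poly (p n) t - u t\<bar> < \<epsilon>" and d2: "\<bar>poly (q n) t - v t\<bar> < \<epsilon>"
          using hn t by (auto simp: dist_real_def)
        have "\<bar>c * poly (q n) t - c * v t\<bar> = \<bar>c\<bar> * \<bar>poly (q n) t - v t\<bar>"
          by (simp add: abs_mult[symmetric] algebra_simps)
        also have "\<dots> \<le> \<bar>c\<bar> * \<epsilon>" using d2 by (intro mult_left_mono) auto
        finally have d3: "c * poly (q n) t \<le> c * v t + \<bar>c\<bar> * \<epsilon>" by linarith
        have "poly r t = poly (p n) t - c * poly (q n) t - a + (1 + \<bar>c\<bar>) * \<epsilon>"
          unfolding r_def by simp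
        moreover have "a + c * v t \<le> u t" by (rule h[OF t])
        ultimately show "0 \<le> poly r t" using d1 d3 by (simp add: algebra_simps)
      qed
      then have "0 \<le> Re (cinner (poly_op r P x) x)" by (rule poly_nonneg_op[OF P])
      moreover have "poly_op r P x = poly_op (p n) P x - c *\<^sub>R poly_op (q n) P x - a *\<^sub>R x + ((1 + \<bar>c\<bar>) * \<epsilon>) *\<^sub>R x"
        unfolding r_def by (simp add: poly_op_add poly_op_diff poly_op_smult poly_op_const)
      ultimately show "a * (norm x)^2 - (1 + \<bar>c\<bar>) * \<epsilon> * (norm x)^2
          \<le> Re (cinner (poly_op (p n) P x) x) - c * Re (cinner (poly_op (q n) P x) x)"
        by (simp add: cinner_add_left cinner_diff_left cinner_scaleR_left cinner_self)
    qed
    then have "a * (norm x)^2 - (1 + \<bar>c\<bar>) * \<epsilon> * (norm x)^2 \<le> H"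
      by (intro tendsto_lowerbound[OF lim]) auto
    moreover have "(1 + \<bar>c\<bar>) * \<epsilon> * (norm x)^2 \<le> e"
    proof -
      have k1: "(1 + \<bar>c\<bar>) * (norm x)^2 \<le> K" unfolding K_def
        by (intro mult_left_mono) auto
      have k2: "\<epsilon> * K = e" unfolding \<epsilon>_def using K by simp
      have "(1 + \<bar>c\<bar>) * \<epsilon> * (norm x)^2 = \<epsilon> * ((1 + \<bar>c\<bar>) * (norm x)^2)" by (simp add: mult_ac)
      also have "\<dots> \<le> \<epsilon> * K" using k1 \<epsilon> by (intro mult_left_mono) auto
      finally show ?thesis using k2 by simp
    qed
    ultimately show ?thesis by linarith
  qed
  then have "a * (norm x)^2 \<le> H" by (rule field_le_epsilon)
  then show ?thesis unfolding H_def by simp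
qed

lemma fcalc_sadj:
  assumes P: "posop P" and f: "continuous_on {0..onorm P} f"
  shows "sadj (fcalc f P)"
  unfolding sadj_def
proof (intro allI)
  fix x y
  obtain p where p: "uniform_limit {0..onorm P} (\<lambda>n t. poly (p n) t) f sequentially"
    using weierstrass_seq[OF f] by blast
  have l1: "(\<lambda>n. cinner (poly_op (p n) P x) y) \<longlonglongrightarrow> cinner (fcalc f P x) y"
    by (intro cinner_tendsto_left fcalc_lim[OF P f p])
  have l2: "(\<lambda>n. cinner x (poly_op (p n) P y)) \<longlonglongrightarrow> cinner x (fcalc f P y)"
    by (rule bounded_bilinear.tendsto[OF bounded_bilinear_cinner tendsto_const fcalc_lim[OF P f p]])
  have "(\<lambda>n. cinner (poly_op (p n) P x) y) = (\<lambda>n. cinner x (poly_op (p n) P y))"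
    using sadj_poly_op[OF posopD(1,3)[OF P]] unfolding sadj_def by blast
  then show "cinner (fcalc f P x) y = cinner x (fcalc f P y)" using l1 l2 LIMSEQ_unique by metis
qed

lemma fcalc_posop:
  assumes P: "posop P" and f: "continuous_on {0..onorm P} f"
    and nn: "\<And>t. t \<in> {0..onorm P} \<Longrightarrow> 0 \<le> f t"
  shows "posop (fcalc f P)"
proof -
  have "0 \<le> Re (cinner (fcalc f P x) x)" for x
    using fcalc_ineq[OF P f f, of 0 0 x] nn by simp
  then show ?thesis unfolding posop_def using fcalc_bl[OF P f] fcalc_sadj[OF P f] by blast
qed

lemma fcalc_sqrt:
  assumes P: "posop P"
  shows "fcalc sqrt P (fcalc sqrt P x) = P x"
proof -
  define M where "M = onorm P"
  have cs: "continuous_on {0..onorm P} sqrt" by (intro continuous_intros)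
  have ci: "continuous_on {0..onorm P} (\<lambda>t::real. t)" by (intro continuous_intros)
  have l: "linear P" using posopD[OF P] by blast
  define S where "S = fcalc sqrt P"
  have sS: "sadj S" unfolding S_def by (rule fcalc_sadj[OF P cs])
  obtain p where p: "uniform_limit {0..onorm P} (\<lambda>n t. poly (p n) t) sqrt sequentially"
    using weierstrass_seq[OF cs] by blast
  have pp: "uniform_limit {0..onorm P} (\<lambda>n t. poly (p n * p n) t) (\<lambda>t. t) sequentially"
  proof (rule uniform_limitI)
    fix e :: real assume e: "e > 0"
    define K where "K = sqrt M"
    have K0: "K \<ge> 0" unfolding K_def M_def using onorm_pos_le[OF posopD(1)[OF P]] by simp
    define \<epsilon> where "\<epsilon> = min 1 (e / (2 + 2 * K))"
    have \<epsilon>: "\<epsilon> > 0" unfolding \<epsilon>_def using e K0 by simp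
    show "eventually (\<lambda>n. \<forall>t\<in>{0..onorm P}. dist (poly (p n * p n) t) t < e) sequentially"
      using uniform_limitD[OF p \<epsilon>]
    proof (rule eventually_mono)
      fix n assume hn: "\<forall>t\<in>{0..onorm P}. dist (poly (p n) t) (sqrt t) < \<epsilon>"
      show "\<forall>t\<in>{0..onorm P}. dist (poly (p n * p n) t) t < e"
      proof
        fix t assume t: "t \<in> {0..onorm P}"
        define a where "a = poly (p n) t"
        define s where "s = sqrt t"
        have d: "\<bar>a - s\<bar> < \<epsilon>" using hn t unfolding a_def s_def by (auto simp: dist_real_def)
        have s0: "0 \<le> s" and sK: "s \<le> K" using t unfolding s_def K_def M_def by auto
        have ss: "s * s = t" using t unfolding s_def by simp
        have "\<bar>a * a - t\<bar> = \<bar>a - s\<bar> * \<bar>a + s\<bar>" unfolding ss[symmetric] by (simp add: abs_mult[symmetric] algebra_simps)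
        also have "\<dots> \<le> \<epsilon> * (1 + 2 * K)"
        proof (rule mult_mono)
          show "\<bar>a - s\<bar> \<le> \<epsilon>" using d by simp
          have "\<bar>a + s\<bar> \<le> \<bar>a - s\<bar> + 2 * s" using s0 by linarith
          also have "\<dots> \<le> 1 + 2 * K" using d sK \<epsilon>_def by linarith
          finally show "\<bar>a + s\<bar> \<le> 1 + 2 * K" .
        qed (use \<epsilon> in auto)
        also have "\<dots> \<le> e / (2 + 2 * K) * (1 + 2 * K)"
          unfolding \<epsilon>_def using K0 by (intro mult_right_mono) auto
        also have "\<dots> < e" using e K0 by (simp add: field_simps)
        finally show "dist (poly (p n * p n) t) t < e" unfolding a_def by (simp add: dist_real_def)
      qed
    qed
  qed
  have l1: "(\<lambda>n. cinner (poly_op (p n * p n) P x) y) \<longlonglongrightarrow> cinner (P x) y" for y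
    using cinner_tendsto_left[OF fcalc_lim[OF P ci pp]] by (simp add: fcalc_id[OF P])
  have l2: "(\<lambda>n. cinner (poly_op (p n * p n) P x) y) \<longlonglongrightarrow> cinner (S x) (S y)" for y
  proof -
    have "(\<lambda>n. cinner (poly_op (p n) P x) (poly_op (p n) P y)) \<longlonglongrightarrow> cinner (S x) (S y)"
      unfolding S_def
      by (rule bounded_bilinear.tendsto[OF bounded_bilinear_cinner fcalc_lim[OF P cs p] fcalc_lim[OF P cs p]])
    moreover have "cinner (poly_op (p n * p n) P x) y = cinner (poly_op (p n) P x) (poly_op (p n) P y)" for n
      using sadj_poly_op[OF posopD(1,3)[OF P], of "p n"] unfolding sadj_def
      by (simp add: poly_op_mult[OF l])
    ultimately show ?thesis by simp
  qed
  have "cinner (P x) y = cinner (S (S x)) y" for y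
  proof -
    have "cinner (P x) y = cinner (S x) (S y)" using LIMSEQ_unique[OF l1 l2] .
    also have "\<dots> = cinner (S (S x)) y" using sS unfolding sadj_def by simp
    finally show ?thesis .
  qed
  then show ?thesis unfolding S_def by (intro cinner_ext) simp
qed


lemma swap_div: "(a - b) / (c - d) = (b - a) / (d - (c::real))"
  by (metis minus_diff_eq minus_divide_divide)

lemma support_line:
  fixes f :: "real \<Rightarrow> real"
  assumes mono: "mono_on {0..} f" and cvx: "convex_on {0..} f" and s: "0 \<le> s"
  shows "\<exists>c. \<forall>t\<ge>0. f s + c * (t - s) \<le> f t"
proof (cases "s = 0")
  case True
  show ?thesis
    by (rule exI[of _ 0]) (use True mono in \<open>auto simp: mono_on_def\<close>)
next
  case False
  then have s0: "s > 0" using s by simp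
  have slope: "(f s - f t) / (s - t) \<le> (f u - f s) / (u - s)" if "0 \<le> t" "t < s" "s < u" for t u
  proof -
    have "(f t - f s) / (t - s) \<le> (f t - f u) / (t - u)"
         "(f t - f u) / (t - u) \<le> (f s - f u) / (s - u)"
      using convex_on_slope_le[OF cvx, of t u s] that by auto
    then show ?thesis by (simp add: swap_div[of "f t"] swap_div[of "f s" "f u"])
  qed
  define L where "L = {(f s - f t) / (s - t) | t. 0 \<le> t \<and> t < s}"
  have Lne: "L \<noteq> {}" unfolding L_def using s0 by auto
  have Lbdd: "bdd_above L" unfolding L_def
    apply (rule bdd_aboveI[of _ "(f (s+1) - f s) / ((s + 1) - s)"])
    apply clarify
    apply (rule slope)
      apply auto
    done
  define c where "c = Sup L"
  have "f s + c * (t - s) \<le> f t" if t: "t \<ge> 0" for t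
  proof (cases t s rule: linorder_cases)
    case less
    have "(f s - f t) / (s - t) \<le> c" unfolding c_def
      by (rule cSup_upper[OF _ Lbdd]) (use t less in \<open>auto simp: L_def\<close>)
    then have "f s - f t \<le> c * (s - t)" using less by (simp add: pos_divide_le_eq)
    then show ?thesis by (simp add: algebra_simps)
  next
    case equal then show ?thesis by simp
  next
    case greater
    have "c \<le> (f t - f s) / (t - s)" unfolding c_def
      by (rule cSup_least[OF Lne]) (use slope greater in \<open>auto simp: L_def\<close>)
    then have "c * (t - s) \<le> f t - f s" using greater by (simp add: pos_le_divide_eq)
    then show ?thesis by (simp add: algebra_simps)
  qed
  then show ?thesis by blast
qed

lemma mono_convex_cont:
  fixes f :: "real \<Rightarrow> real"
  assumes mono: "mono_on {0..} f" and cvx: "convex_on {0..} f"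
  shows "continuous_on {0..} f"
  unfolding continuous_on_eq_continuous_within
proof
  fix x :: real assume x: "x \<in> {0..}"
  show "continuous (at x within {0..}) f"
  proof (cases "x = 0")
    case False
    then have xp: "x \<in> {0<..}" using x by simp
    have "convex_on {0<..} f" by (rule convex_on_subset[OF cvx]) auto
    then have "continuous_on {0<..} f" by (intro convex_on_continuous) auto
    then have "isCont f x" using continuous_on_eq_continuous_at[of "{0<..}" f] xp by auto
    then show ?thesis by (rule continuous_at_imp_continuous_at_within)
  next
    case True
    have "(f \<longlongrightarrow> f 0) (at 0 within {0..})"
    proof (rule tendsto_sandwich[of "\<lambda>t. f 0" f _ "\<lambda>t. (1 - t) * f 0 + t * f 1"])
      show "eventually (\<lambda>t. f 0 \<le> f t) (at 0 within {0..})"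
        unfolding eventually_at_filter using mono by (auto simp: mono_on_def)
      show "eventually (\<lambda>t. f t \<le> (1 - t) * f 0 + t * f 1) (at 0 within {0..})"
        unfolding eventually_at
      proof (intro exI[of _ 1] conjI ballI impI)
        fix t :: real assume t: "t \<in> {0..}" "t \<noteq> 0 \<and> dist t 0 < 1"
        then have "0 \<le> t" "t \<le> 1" by (auto simp: dist_real_def)
        then show "f t \<le> (1 - t) * f 0 + t * f 1"
          using convex_onD[OF cvx, of t 0 1] by simp
      qed simp
      show "((\<lambda>t. f 0) \<longlongrightarrow> f 0) (at 0 within {0..})" by simp
      have "((\<lambda>t. (1 - t) * f 0 + t * f 1) \<longlongrightarrow> (1 - 0) * f 0 + 0 * f 1) (at 0 within {0..})"
        by (intro tendsto_intros)
      then show "((\<lambda>t. (1 - t) * f 0 + t * f 1) \<longlongrightarrow> f 0) (at 0 within {0..})" by simp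
    qed
    then show ?thesis using True by (simp add: continuous_within)
  qed
qed

lemma jensen_op:
  fixes f :: "real \<Rightarrow> real"
  assumes Q: "posop Q" and x: "norm x = 1"
    and mono: "mono_on {0..} f" and cvx: "convex_on {0..} f"
  shows "f (Re (cinner (Q x) x)) \<le> Re (cinner (fcalc f Q x) x)"
proof -
  define s where "s = Re (cinner (Q x) x)"
  have s0: "0 \<le> s" unfolding s_def using posopD(4)[OF Q] by blast
  obtain c where c: "\<And>t. t \<ge> 0 \<Longrightarrow> f s + c * (t - s) \<le> f t"
    using support_line[OF mono cvx s0] by blast
  have cf: "continuous_on {0..onorm Q} f"
    by (rule continuous_on_subset[OF mono_convex_cont[OF mono cvx]]) auto
  have ci: "continuous_on {0..onorm Q} (\<lambda>t::real. t)" by (intro continuous_intros)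
  have "(f s - c * s) * (norm x)^2 + c * Re (cinner (fcalc (\<lambda>t. t) Q x) x) \<le> Re (cinner (fcalc f Q x) x)"
    by (rule fcalc_ineq[OF Q cf ci]) (use c in \<open>auto simp: algebra_simps\<close>)
  then show ?thesis using x unfolding fcalc_id[OF Q] s_def[symmetric] by simp
qed

lemma powr_convex0:
  fixes p :: real
  assumes p: "p \<ge> 1"
  shows "convex_on {0..} (\<lambda>x. x powr p)"
proof (rule convex_on_linorderI)
  show "convex {0::real..}" by simp
  fix t x y :: real
  assume t: "0 < t" "t < 1" and xy: "x \<in> {0..}" "y \<in> {0..}" "x < y"
  show "((1 - t) *\<^sub>R x + t *\<^sub>R y) powr p \<le> (1 - t) * x powr p + t * y powr p"
  proof (cases "x = 0")
    case False
    then have "x \<in> {0<..}" "y \<in> {0<..}" using xy by auto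
    then show ?thesis using convex_onD[OF powr_convex[OF p], of t x y] t by simp
  next
    case True
    have "(t * y) powr p = t powr p * y powr p" using t xy by (simp add: powr_mult)
    also have "\<dots> \<le> t powr 1 * y powr p"
      using t p by (intro mult_right_mono powr_mono') auto
    finally show ?thesis using True t p by simp
  qed
qed

lemma powr_mono0: "p \<ge> 0 \<Longrightarrow> mono_on {0..} (\<lambda>x::real. x powr p)"
  unfolding mono_on_def by (auto intro: powr_mono2)

lemma buzano:
  assumes e: "norm e = 1"
  shows "2 * cmod (cinner a e * cinner e b) \<le> norm a * norm b + cmod (cinner a b)"
proof -
  define c where "c = cinner a e"
  define w where "w = scaleC (2 * c) e - a"
  have ee: "cinner e e = 1" using e by (simp add: cinner_self)
  have ea: "cinner e a = cnj c" unfolding c_def by (rule cinner_commute)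
  have "cinner w w = cinner a a"
    unfolding w_def
    by (simp add: cinner_diff_left cinner_diff_right cinner_scaleC_left cinner_scaleC_right ee ea
        c_def[symmetric] algebra_simps)
  then have nw: "norm w = norm a" by (simp add: norm_cinner)
  have "cinner w b = 2 * c * cinner e b - cinner a b"
    unfolding w_def by (simp add: cinner_diff_left cinner_scaleC_left)
  then have "2 * (c * cinner e b) = cinner w b + cinner a b" by simp
  then have "cmod (2 * (c * cinner e b)) \<le> cmod (cinner w b) + cmod (cinner a b)"
    by (metis norm_triangle_ineq)
  also have "\<dots> \<le> norm a * norm b + cmod (cinner a b)"
    using Cauchy_Schwarz[of w b] nw by simp
  finally show ?thesis unfolding c_def by (simp add: norm_mult)
qed


lemma mccarthy:
  assumes S: "posop S" and x: "norm x = 1" and b0: "0 < \<beta>" and b1: "\<beta> < 1"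
  shows "Re (cinner (S (S x)) x) \<le> (Re (cinner (fcalc (\<lambda>t. t powr (2 / \<beta>)) S x) x)) powr \<beta>"
proof -
  define s where "s = Re (cinner (S (S x)) x)"
  have "cinner (S (S x)) x = cinner (S x) (S x)" using posopD(3)[OF S] unfolding sadj_def by simp
  then have s0: "0 \<le> s" unfolding s_def by (simp add: cinner_self)
  define r where "r = 1 / \<beta>"
  have r1: "r \<ge> 1" unfolding r_def using b0 b1 by simp
  obtain c where c: "\<And>w. w \<ge> 0 \<Longrightarrow> s powr r + c * (w - s) \<le> w powr r"
    using support_line[OF powr_mono0 powr_convex0[OF r1] s0] r1 by auto
  have cg: "continuous_on {0..onorm S} (\<lambda>t. t powr (2 / \<beta>))"
    using b0 by (intro continuous_on_powr' continuous_intros) auto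
  have csq: "continuous_on {0..onorm S} (\<lambda>t::real. t^2)" by (intro continuous_intros)
  have h: "(s powr r - c * s) + c * t^2 \<le> t powr (2 / \<beta>)" if t: "t \<in> {0..onorm S}" for t
  proof -
    have "(t^2) powr r = t powr (2 / \<beta>)"
    proof (cases "t = 0")
      case True then show ?thesis using b0 r1 by simp
    next
      case False
      then have "t > 0" using t by simp
      then have "t^2 = t powr 2" using powr_realpow[of t 2] by simp
      then show ?thesis unfolding r_def by (simp add: powr_powr)
    qed
    moreover have "s powr r + c * (t^2 - s) \<le> (t^2) powr r" by (rule c) simp
    ultimately show ?thesis by (simp add: algebra_simps)
  qed
  have "(s powr r - c * s) * (norm x)^2 + c * Re (cinner (fcalc (\<lambda>t. t^2) S x) x)
      \<le> Re (cinner (fcalc (\<lambda>t. t powr (2 / \<beta>)) S x) x)"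
    by (rule fcalc_ineq[OF S cg csq h])
  then have le: "s powr r \<le> Re (cinner (fcalc (\<lambda>t. t powr (2 / \<beta>)) S x) x)"
    using x unfolding fcalc_sq[OF S] s_def[symmetric] by (simp add: algebra_simps)
  have "s = (s powr r) powr \<beta>" unfolding r_def using s0 b0 by (simp add: powr_powr powr_one)
  also have "\<dots> \<le> (Re (cinner (fcalc (\<lambda>t. t powr (2 / \<beta>)) S x) x)) powr \<beta>"
    using le b0 by (intro powr_mono2) auto
  finally show ?thesis unfolding s_def .
qed

lemma sq_half_le: "((p + k)/2)^2 \<le> (p^2 + k^2) / (2::real)"
proof -
  have "(p^2 + k^2) / 2 - ((p + k)/2)^2 = ((p - k)/2)^2" by (simp add: power2_eq_square field_simps)
  moreover have "0 \<le> ((p - k)/2)^2" by simp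
  ultimately show ?thesis by linarith
qed

lemma young0:
  fixes a b \<alpha> :: real
  assumes "0 \<le> a" "0 \<le> b" "0 < \<alpha>" "\<alpha> < 1"
  shows "a powr \<alpha> * b powr (1 - \<alpha>) \<le> \<alpha> * a + (1 - \<alpha>) * b"
proof (cases "a = 0 \<or> b = 0")
  case True
  then show ?thesis using assms by auto
next
  case False
  then show ?thesis using Youngs_inequality_0[of \<alpha> "1 - \<alpha>" a b] assms by simp
qed

theorem theorem3p1:
  fixes A B :: "'a::chilbert \<Rightarrow> 'a" and x :: 'a and f :: "real \<Rightarrow> real"
  assumes "bounded_op A" and "bounded_op B"
    and "norm x = 1"
    and "mono_on {0..} f" and "convex_on {0..} f"
  shows "(\<forall>\<alpha>::real. 0 < \<alpha> \<and> \<alpha> < 1 \<longrightarrow>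
           f ((cmod (cinner (A x) x * cinner (B x) x))\<^sup>2)
           \<le> (f ((cmod (cinner (B (A x)) x))\<^sup>2)
               + Re (cinner ((\<lambda>y. \<alpha> *\<^sub>R fcalc f (fcalc (\<lambda>t. t powr (2 / \<alpha>)) (abs_op A)) y
                                + (1 - \<alpha>) *\<^sub>R fcalc f (fcalc (\<lambda>t. t powr (2 / (1 - \<alpha>))) (abs_op (adj B))) y) x) x)) / 2)
       \<and> f (cmod (cinner (A x) x * cinner (B x) x))
           \<le> 1/2 * f (cmod (cinner (B (A x)) x))
             + 1/4 * Re (cinner ((\<lambda>y. fcalc f (abs_op A ^^ 2) y
                                     + fcalc f (abs_op (adj B) ^^ 2) y) x) x)"
proof -
  note bA = assms(1) and bB = assms(2) and nx = assms(3) and mono = assms(4) and cvx = assms(5)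
  have bB': "bounded_op (adj B)" by (rule bounded_op_adj[OF bB])
  define PA where "PA = adj A \<circ> A"
  define PB where "PB = adj (adj B) \<circ> adj B"
  have PA: "posop PA" unfolding PA_def by (rule posop_AA(1)[OF bA])
  have PB: "posop PB" unfolding PB_def by (rule posop_AA(1)[OF bB'])
  have pA: "cinner (PA y) y = of_real ((norm (A y))^2)" for y unfolding PA_def by (rule posop_AA(2)[OF bA])
  have pB: "cinner (PB y) y = of_real ((norm (adj B y))^2)" for y unfolding PB_def by (rule posop_AA(2)[OF bB'])
  define SA where "SA = abs_op A"
  define SB where "SB = abs_op (adj B)"
  have SAd: "SA = fcalc sqrt PA" unfolding SA_def PA_def abs_op_def ..
  have SBd: "SB = fcalc sqrt PB" unfolding SB_def PB_def abs_op_def ..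
  have csA: "continuous_on {0..onorm PA} sqrt" by (intro continuous_intros)
  have csB: "continuous_on {0..onorm PB} sqrt" by (intro continuous_intros)
  have SA: "posop SA" unfolding SAd by (rule fcalc_posop[OF PA csA]) simp
  have SB: "posop SB" unfolding SBd by (rule fcalc_posop[OF PB csB]) simp
  have SAsq: "SA (SA y) = PA y" for y unfolding SAd by (rule fcalc_sqrt[OF PA])
  have SBsq: "SB (SB y) = PB y" for y unfolding SBd by (rule fcalc_sqrt[OF PB])
  have powA: "abs_op A ^^ 2 = PA" by (rule ext) (simp add: SA_def[symmetric] SAsq numeral_2_eq_2)
  have powB: "abs_op (adj B) ^^ 2 = PB" by (rule ext) (simp add: SB_def[symmetric] SBsq numeral_2_eq_2)
  define xa where "xa = norm (A x)"
  define xb where "xb = norm (adj B x)"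
  define k where "k = cmod (cinner (B (A x)) x)"
  define L where "L = cmod (cinner (A x) x * cinner (B x) x)"
  have xa0: "0 \<le> xa" and xb0: "0 \<le> xb" and k0: "0 \<le> k" and L0: "0 \<le> L"
    unfolding xa_def xb_def k_def L_def by auto
  have Bx: "cinner (B x) x = cinner x (adj B x)" by (rule adj_prop[OF bB])
  have BAx: "cinner (B (A x)) x = cinner (A x) (adj B x)" by (rule adj_prop[OF bB])
  have buz: "2 * L \<le> xa * xb + k"
    using buzano[OF nx, of "A x" "adj B x"] unfolding L_def xa_def xb_def k_def Bx BAx .
  have Fm: "f u \<le> f v" if "0 \<le> u" "u \<le> v" for u v
    using mono that by (auto simp: mono_on_def)
  have Fc: "f (\<mu> * u + (1 - \<mu>) * v) \<le> \<mu> * f u + (1 - \<mu>) * f v"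
    if "0 \<le> u" "0 \<le> v" "0 \<le> \<mu>" "\<mu> \<le> 1" for u v \<mu>
    using convex_onD[OF cvx, of "1 - \<mu>" u v] that by simp
  have JA: "f (xa^2) \<le> Re (cinner (fcalc f PA x) x)"
    using jensen_op[OF PA nx mono cvx] unfolding pA xa_def by simp
  have JB: "f (xb^2) \<le> Re (cinner (fcalc f PB x) x)"
    using jensen_op[OF PB nx mono cvx] unfolding pB xb_def by simp
  have part2: "f L \<le> 1/2 * f k + 1/4 * (Re (cinner (fcalc f PA x) x) + Re (cinner (fcalc f PB x) x))"
  proof -
    have "(xa - xb)^2 = xa^2 + xb^2 - 2 * (xa * xb)" by (simp add: power2_diff mult.assoc)
    then have "0 \<le> xa^2 + xb^2 - 2 * (xa * xb)" by (metis zero_le_power2)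
    then have "2 * (xa * xb) \<le> xa^2 + xb^2" by simp
    then have "xa * xb \<le> (xa^2 + xb^2) / 2" by (simp add: field_simps)
    then have "L \<le> (xa^2 + xb^2) / 4 + k / 2" using buz by linarith
    then have "L \<le> 1/2 * ((xa^2 + xb^2) / 2) + (1 - 1/2) * k" by simp
    then have "f L \<le> f (1/2 * ((xa^2 + xb^2) / 2) + (1 - 1/2) * k)"
      using L0 by (intro Fm) auto
    also have "\<dots> \<le> 1/2 * f ((xa^2 + xb^2) / 2) + (1 - 1/2) * f k"
      using k0 by (intro Fc) auto
    also have "f ((xa^2 + xb^2) / 2) = f (1/2 * xa^2 + (1 - 1/2) * xb^2)" by (simp add: field_simps)
    also have "\<dots> \<le> 1/2 * f (xa^2) + (1 - 1/2) * f (xb^2)" by (intro Fc) auto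
    finally show ?thesis using JA JB by (simp add: field_simps)
  qed
  have part1: "f (L^2) \<le> (f (k^2) + Re (cinner ((\<lambda>y. \<alpha> *\<^sub>R fcalc f (fcalc (\<lambda>t. t powr (2 / \<alpha>)) SA) y
                                + (1 - \<alpha>) *\<^sub>R fcalc f (fcalc (\<lambda>t. t powr (2 / (1 - \<alpha>))) SB) y) x) x)) / 2"
    if al: "0 < \<alpha>" "\<alpha> < 1" for \<alpha>
  proof -
    define QA where "QA = fcalc (\<lambda>t. t powr (2 / \<alpha>)) SA"
    define QB where "QB = fcalc (\<lambda>t. t powr (2 / (1 - \<alpha>))) SB"
    have cgA: "continuous_on {0..onorm SA} (\<lambda>t. t powr (2 / \<alpha>))"
      using al by (intro continuous_on_powr' continuous_intros) auto
    have cgB: "continuous_on {0..onorm SB} (\<lambda>t. t powr (2 / (1 - \<alpha>)))"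
      using al by (intro continuous_on_powr' continuous_intros) auto
    have QA: "posop QA" unfolding QA_def by (rule fcalc_posop[OF SA cgA]) simp
    have QB: "posop QB" unfolding QB_def by (rule fcalc_posop[OF SB cgB]) simp
    define a where "a = Re (cinner (QA x) x)"
    define b where "b = Re (cinner (QB x) x)"
    have a0: "0 \<le> a" unfolding a_def by (rule posopD(4)[OF QA])
    have b0: "0 \<le> b" unfolding b_def by (rule posopD(4)[OF QB])
    have ma: "xa^2 \<le> a powr \<alpha>"
      using mccarthy[OF SA nx al] unfolding SAsq pA a_def QA_def xa_def by simp
    have mb: "xb^2 \<le> b powr (1 - \<alpha>)"
      using mccarthy[OF SB nx, of "1 - \<alpha>"] al unfolding SBsq pB b_def QB_def xb_def by simp
    define V where "V = \<alpha> * a + (1 - \<alpha>) * b"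
    have V0: "0 \<le> V" unfolding V_def using a0 b0 al by simp
    have "xa^2 * xb^2 \<le> a powr \<alpha> * b powr (1 - \<alpha>)"
      using ma mb by (intro mult_mono) auto
    also have "\<dots> \<le> V" unfolding V_def by (rule young0[OF a0 b0 al])
    finally have xV: "xa^2 * xb^2 \<le> V" .
    have "L^2 \<le> ((xa * xb + k) / 2)^2"
      using buz L0 by (intro power_mono) auto
    also have "\<dots> \<le> ((xa * xb)^2 + k^2) / 2"
      by (rule sq_half_le)
    also have "\<dots> \<le> 1/2 * V + (1 - 1/2) * k^2" using xV by (simp add: power_mult_distrib)
    finally have L2: "L^2 \<le> 1/2 * V + (1 - 1/2) * k^2" .
    have "f (L^2) \<le> f (1/2 * V + (1 - 1/2) * k^2)" using L2 by (intro Fm) auto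
    also have "\<dots> \<le> 1/2 * f V + (1 - 1/2) * f (k^2)" using V0 by (intro Fc) auto
    finally have s1: "2 * f (L^2) \<le> f V + f (k^2)" by (simp add: field_simps)
    have s2: "f V \<le> \<alpha> * f a + (1 - \<alpha>) * f b" unfolding V_def using a0 b0 al by (intro Fc) auto
    define RA where "RA = Re (cinner (fcalc f QA x) x)"
    define RB where "RB = Re (cinner (fcalc f QB x) x)"
    have s3: "f a \<le> RA" unfolding a_def RA_def by (rule jensen_op[OF QA nx mono cvx])
    have s4: "f b \<le> RB" unfolding b_def RB_def by (rule jensen_op[OF QB nx mono cvx])
    have m1: "\<alpha> * f a \<le> \<alpha> * RA" using s3 al by (intro mult_left_mono) auto
    have m2: "(1 - \<alpha>) * f b \<le> (1 - \<alpha>) * RB" using s4 al by (intro mult_left_mono) auto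
    have e: "Re (cinner ((\<lambda>y. \<alpha> *\<^sub>R fcalc f QA y + (1 - \<alpha>) *\<^sub>R fcalc f QB y) x) x)
        = \<alpha> * RA + (1 - \<alpha>) * RB"
      unfolding RA_def RB_def by (simp add: cinner_add_left cinner_scaleR_left)
    define u1 where "u1 = \<alpha> * f a"
    define u2 where "u2 = (1 - \<alpha>) * f b"
    define w1 where "w1 = \<alpha> * RA"
    define w2 where "w2 = (1 - \<alpha>) * RB"
    have "2 * f (L^2) \<le> f (k^2) + (w1 + w2)"
      using s1 s2 m1 m2 unfolding u1_def[symmetric] u2_def[symmetric] w1_def[symmetric] w2_def[symmetric]
      by linarith
    then have "f (L^2) \<le> (f (k^2) + (w1 + w2)) / 2" by (simp add: field_simps)
    then show ?thesis using e unfolding w1_def w2_def QA_def QB_def by simp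
  qed
  show ?thesis
    using part1 part2 unfolding SA_def SB_def L_def k_def powA powB
    by (simp add: cinner_add_left)
qed

end
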